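(* Let $K$ be a field of characteristic $0$, let $L=\mathcal{L}(x,y)$ be the free Lie algebra over $K$ freely generated by $x,y$, let $\delta$ be the derivation of $L$ with $\delta(x)=0$, $\delta(y)=x$, and $L^\delta=\ker\delta$. If $f\in L^\delta$ is a nonzero element of degree at most $5$, then $f$ belongs to the Lie subalgebra of $L$ generated by $x$ and $[y,x]$. *)

theory Defs
  imports Main "HOL-Library.Function_Algebras"
begin

text \<open>Free associative algebra K<x,y> on two letters: noncommutative polynomials are
  functions from words to coefficients (finite support is automatic for all elements we use).
  The free Lie algebra L(x,y) is realised, as usual, as the Lie subalgebra of K<x,y>
  (with bracket [a,b] = ab - ba) generated by x and y.\<close>

datatype letter = X | Y

type_synonym 'k ncpoly = "letter list \<Rightarrow> 'k"

definition nc_var :: "letter \<Rightarrow> 'k::field ncpoly" where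
  "nc_var a = (\<lambda>w. if w = [a] then 1 else 0)"

definition nc_mult :: "'k::field ncpoly \<Rightarrow> 'k ncpoly \<Rightarrow> 'k ncpoly" where
  "nc_mult p q = (\<lambda>w. \<Sum>i\<le>length w. p (take i w) * q (drop i w))"

definition nc_smult :: "'k::field \<Rightarrow> 'k ncpoly \<Rightarrow> 'k ncpoly" where
  "nc_smult c p = (\<lambda>w. c * p w)"

definition lie_bracket :: "'k::field ncpoly \<Rightarrow> 'k ncpoly \<Rightarrow> 'k ncpoly" where
  "lie_bracket p q = nc_mult p q - nc_mult q p"

inductive_set lie_gen :: "'k::field ncpoly set \<Rightarrow> 'k ncpoly set" for S where
  base: "p \<in> S \<Longrightarrow> p \<in> lie_gen S"
| zero: "0 \<in> lie_gen S"
| add: "p \<in> lie_gen S \<Longrightarrow> q \<in> lie_gen S \<Longrightarrow> p + q \<in> lie_gen S"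
| smult: "p \<in> lie_gen S \<Longrightarrow> nc_smult c p \<in> lie_gen S"
| bracket: "p \<in> lie_gen S \<Longrightarrow> q \<in> lie_gen S \<Longrightarrow> lie_bracket p q \<in> lie_gen S"

definition free_lie :: "'k::field ncpoly set" where
  "free_lie = lie_gen {nc_var X, nc_var Y}"

text \<open>The derivation delta with delta(x)=0, delta(y)=x, extended linearly (and as a derivation)
  to words: it replaces one occurrence of y by x in all possible ways. Its restriction to
  L(x,y) is the Lie derivation of the paper.\<close>
definition delta :: "'k::field ncpoly \<Rightarrow> 'k ncpoly" where
  "delta p = (\<lambda>w. \<Sum>i\<in>{i. i < length w \<and> w ! i = X}. p (w[i := Y]))"

definition nc_degree_le :: "'k::field ncpoly \<Rightarrow> nat \<Rightarrow> bool" where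
  "nc_degree_le p n \<longleftrightarrow> (\<forall>w. n < length w \<longrightarrow> p w = 0)"

end

theory Submission
  imports Defs
begin


definition pl :: "(letter list \<times> int) list \<Rightarrow> 'k::field ncpoly" where
  "pl xs = (\<lambda>w. of_int (sum_list (map (\<lambda>(v,c). if v = w then c else 0) xs)))"

definition hom :: "'k::field ncpoly \<Rightarrow> nat \<Rightarrow> bool" where
  "hom p d \<longleftrightarrow> (\<forall>w. length w \<noteq> d \<longrightarrow> p w = 0)"

definition trunc5 :: "'k::field ncpoly \<Rightarrow> 'k ncpoly" where
  "trunc5 p = (\<lambda>w. if length w \<le> 5 then p w else 0)"

fun words :: "nat \<Rightarrow> letter list list" where
  "words 0 = [[]]"
| "words (Suc n) = map ((#) X) (words n) @ map ((#) Y) (words n)"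

lemma set_words: "set (words n) = {w. length w = n}"
proof (induction n)
  case 0 then show ?case by auto
next
  case (Suc n)
  show ?case
  proof (rule set_eqI, rule iffI)
    fix w :: "letter list" assume "w \<in> set (words (Suc n))" then show "w \<in> {w. length w = Suc n}" using Suc by auto
  next
    fix w :: "letter list" assume "w \<in> {w. length w = Suc n}"
    then obtain a w' where w: "w = a # w'" "length w' = n" by (cases w) auto
    then show "w \<in> set (words (Suc n))" using Suc by (cases a) auto
  qed
qed

lemma ext_check:
  assumes "hom p d" "hom q d" "\<forall>w\<in>set (words d). p w = q w"
  shows "p = q"
proof
  fix w show "p w = q w"
    using assms unfolding hom_def set_words by (cases "length w = d") auto
qed

lemma nc_mult_Nil [simp]: "nc_mult p q [] = p [] * q []"
  by (simp add: nc_mult_def)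

lemma nc_mult_Cons [simp]:
  "nc_mult p q (a # w) = p [] * q (a # w) + nc_mult (\<lambda>u. p (a # u)) q w"
proof -
  have "nc_mult p q (a # w) = (\<Sum>i\<le>Suc (length w). p (take i (a # w)) * q (drop i (a # w)))"
    by (simp add: nc_mult_def)
  also have "\<dots> = p [] * q (a # w) + (\<Sum>i\<le>length w. p (take (Suc i) (a # w)) * q (drop (Suc i) (a # w)))"
    by (subst sum.atMost_Suc_shift) simp
  also have "\<dots> = p [] * q (a # w) + nc_mult (\<lambda>u. p (a # u)) q w"
    by (simp add: nc_mult_def)
  finally show ?thesis .
qed

lemma hom_mult:
  assumes "hom p d" "hom q e" shows "hom (nc_mult p q) (d + e)"
  unfolding hom_def
proof (intro allI impI)
  fix w :: "letter list" assume w: "length w \<noteq> d + e"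
  have "p (take i w) * q (drop i w) = 0" if "i \<le> length w" for i
  proof (cases "i = d")
    case True
    then have "length (drop i w) \<noteq> e" using w that by auto
    then show ?thesis using assms(2) unfolding hom_def by simp
  next
    case False
    then have "length (take i w) \<noteq> d" using that by auto
    then show ?thesis using assms(1) unfolding hom_def by simp
  qed
  then show "nc_mult p q w = 0" unfolding nc_mult_def by (intro sum.neutral) auto
qed

lemma hom_bracket:
  assumes "hom p d" "hom q e" shows "hom (lie_bracket p q) (d + e)"
  using hom_mult[OF assms] hom_mult[OF assms(2,1)]
  unfolding hom_def lie_bracket_def by (simp add: add.commute)

lemma hom_pl: "list_all (\<lambda>(v,c). length v = d) xs \<Longrightarrow> hom (pl xs) d"
  unfolding hom_def pl_def
proof (intro allI impI)
  fix w :: "letter list" assume a: "list_all (\<lambda>(v,c). length v = d) xs" "length w \<noteq> d"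
  have "sum_list (map (\<lambda>(v,c). if v = w then c else 0) xs) = 0"
    using a by (induction xs) auto
  then show "of_int (sum_list (map (\<lambda>(v,c). if v = w then c else 0) xs)) = (0::'a)"
    by simp
qed

lemma hom_trunc_le: "hom p d \<Longrightarrow> d \<le> 5 \<Longrightarrow> trunc5 p = p"
  unfolding hom_def trunc5_def by (rule ext) auto

lemma hom_trunc_gt: "hom p d \<Longrightarrow> 5 < d \<Longrightarrow> trunc5 p = 0"
  unfolding hom_def trunc5_def by (rule ext) auto

lemma hom_lin: "hom p d \<Longrightarrow> hom q d \<Longrightarrow> hom (\<lambda>w. of_int a * p w + q w) d"
  unfolding hom_def by auto

lemma hom_lin1: "hom p d \<Longrightarrow> hom (\<lambda>w. of_int a * p w) d"
  unfolding hom_def by auto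

lemma hom_zero: "hom (\<lambda>w. 0) d"
  unfolding hom_def by auto

lemma hom_var: "hom (nc_var a) 1"
  unfolding hom_def nc_var_def by auto

lemma trunc_bracket: "trunc5 (lie_bracket p q) = trunc5 (lie_bracket (trunc5 p) (trunc5 q))"
proof (rule ext)
  fix w :: "letter list"
  show "trunc5 (lie_bracket p q) w = trunc5 (lie_bracket (trunc5 p) (trunc5 q)) w"
  proof (cases "length w \<le> 5")
    case True
    have "nc_mult p q w = nc_mult (trunc5 p) (trunc5 q) w" for p q :: "'a ncpoly"
      unfolding nc_mult_def trunc5_def using True by (intro sum.cong) auto
    then show ?thesis unfolding trunc5_def lie_bracket_def by simp
  qed (simp add: trunc5_def)
qed

lemma delta_eval: "delta p w = sum_list (map (\<lambda>i. if w ! i = X then p (w[i := Y]) else 0) [0..<length w])"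
proof -
  have "delta p w = (\<Sum>i\<in>{i. i < length w \<and> w ! i = X}. p (w[i := Y]))" by (simp add: delta_def)
  also have "\<dots> = (\<Sum>i<length w. if w ! i = X then p (w[i := Y]) else 0)"
    using sum.inter_filter[of "{..<length w}" "\<lambda>i. p (w[i := Y])" "\<lambda>i. w ! i = X"]
    by (simp add: lessThan_def)
  also have "\<dots> = sum_list (map (\<lambda>i. if w ! i = X then p (w[i := Y]) else 0) [0..<length w])"
    by (simp only: interv_sum_list_conv_sum_set_nat set_upt atLeast0LessThan)
  finally show ?thesis .
qed

definition Sp :: "(nat \<Rightarrow> 'k::field ncpoly) \<Rightarrow> nat \<Rightarrow> 'k ncpoly set" where
  "Sp Bf n = {p. \<exists>c. p = (\<lambda>w. \<Sum>k<n. c k * Bf k w)}"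

lemma Sp_zero: "(\<lambda>w. 0) \<in> Sp Bf n"
  unfolding Sp_def by (rule CollectI, rule exI[of _ "\<lambda>_. 0"]) simp

lemma Sp_zero': "0 \<in> Sp Bf n"
  using Sp_zero by (simp add: zero_fun_def)

lemma Sp_add: "p \<in> Sp Bf n \<Longrightarrow> q \<in> Sp Bf n \<Longrightarrow> (\<lambda>w. p w + q w) \<in> Sp Bf n"
  unfolding Sp_def
proof (elim CollectE exE, intro CollectI)
  fix c d assume "p = (\<lambda>w. \<Sum>k<n. c k * Bf k w)" "q = (\<lambda>w. \<Sum>k<n. d k * Bf k w)"
  then show "\<exists>e. (\<lambda>w. p w + q w) = (\<lambda>w. \<Sum>k<n. e k * Bf k w)"
    by (intro exI[of _ "\<lambda>k. c k + d k"]) (simp add: distrib_right sum.distrib)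
qed

lemma Sp_add': "p \<in> Sp Bf n \<Longrightarrow> q \<in> Sp Bf n \<Longrightarrow> p + q \<in> Sp Bf n"
  using Sp_add[of p Bf n q] by (simp add: plus_fun_def)

lemma Sp_smult: "p \<in> Sp Bf n \<Longrightarrow> (\<lambda>w. a * p w) \<in> Sp Bf n"
  unfolding Sp_def
proof (elim CollectE exE, intro CollectI)
  fix c assume "p = (\<lambda>w. \<Sum>k<n. c k * Bf k w)"
  then show "\<exists>e. (\<lambda>w. a * p w) = (\<lambda>w. \<Sum>k<n. e k * Bf k w)"
    by (intro exI[of _ "\<lambda>k. a * c k"]) (simp add: sum_distrib_left mult.assoc)
qed

lemma Sp_B: "k < n \<Longrightarrow> Bf k \<in> Sp Bf n"
  unfolding Sp_def
proof (intro CollectI exI[of _ "\<lambda>i. if i = k then 1 else 0"])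
  assume "k < n"
  show "Bf k = (\<lambda>w. \<Sum>i<n. (if i = k then 1 else 0) * Bf i w)"
  proof
    fix w
    have "(\<Sum>i<n. (if i = k then 1 else 0) * Bf i w) = (\<Sum>i<n. if i = k then Bf k w else 0)"
      by (intro sum.cong) auto
    then show "Bf k w = (\<Sum>i<n. (if i = k then 1 else 0) * Bf i w)" using \<open>k < n\<close> by simp
  qed
qed

lemma Sp_lin: assumes "k < n" "p \<in> Sp Bf n" shows "(\<lambda>w. of_int a * Bf k w + p w) \<in> Sp Bf n"
  using Sp_add[OF Sp_smult[OF Sp_B[OF assms(1)]] assms(2)] by simp

lemma Sp_sum: "finite A \<Longrightarrow> (\<And>i. i \<in> A \<Longrightarrow> g i \<in> Sp Bf n) \<Longrightarrow> (\<lambda>w. \<Sum>i\<in>A. g i w) \<in> Sp Bf n"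
proof (induction A rule: finite_induct)
  case empty then show ?case using Sp_zero by simp
next
  case (insert x F)
  then show ?case using Sp_add[of "g x" Bf n "\<lambda>w. \<Sum>i\<in>F. g i w"] by simp
qed

lemma nc_mult_lin:
  "nc_mult (\<lambda>w. \<Sum>i<n. c i * Bf i w) (\<lambda>w. \<Sum>j<n. d j * Bf j w) w
   = (\<Sum>i<n. \<Sum>j<n. c i * d j * nc_mult (Bf i) (Bf j) w)"
proof -
  have "nc_mult (\<lambda>w. \<Sum>i<n. c i * Bf i w) (\<lambda>w. \<Sum>j<n. d j * Bf j w) w
     = (\<Sum>s\<le>length w. \<Sum>i<n. \<Sum>j<n. c i * d j * (Bf i (take s w) * Bf j (drop s w)))"
    unfolding nc_mult_def by (simp add: sum_product mult_ac)
  also have "\<dots> = (\<Sum>i<n. \<Sum>j<n. \<Sum>s\<le>length w. c i * d j * (Bf i (take s w) * Bf j (drop s w)))"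
    by (simp only: sum.swap[of _ "{..length w}" "{..<n}"])
  also have "\<dots> = (\<Sum>i<n. \<Sum>j<n. c i * d j * nc_mult (Bf i) (Bf j) w)"
    unfolding nc_mult_def by (simp add: sum_distrib_left)
  finally show ?thesis .
qed

lemma bracket_lin:
  "lie_bracket (\<lambda>w. \<Sum>i<n. c i * Bf i w) (\<lambda>w. \<Sum>j<n. d j * Bf j w) w
   = (\<Sum>i<n. \<Sum>j<n. c i * d j * lie_bracket (Bf i) (Bf j) w)"
proof -
  have "lie_bracket (\<lambda>w. \<Sum>i<n. c i * Bf i w) (\<lambda>w. \<Sum>j<n. d j * Bf j w) w
    = (\<Sum>i<n. \<Sum>j<n. c i * d j * nc_mult (Bf i) (Bf j) w) - (\<Sum>i<n. \<Sum>j<n. d i * c j * nc_mult (Bf i) (Bf j) w)"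
    unfolding lie_bracket_def by (simp add: nc_mult_lin)
  also have "(\<Sum>i<n. \<Sum>j<n. d i * c j * nc_mult (Bf i) (Bf j) w) = (\<Sum>i<n. \<Sum>j<n. c i * d j * nc_mult (Bf j) (Bf i) w)"
    by (subst sum.swap) (simp add: mult_ac)
  finally show ?thesis
    unfolding lie_bracket_def by (simp add: sum_subtractf right_diff_distrib)
qed

lemma Sp_bracket:
  assumes "p \<in> Sp Bf n" "q \<in> Sp Bf n"
    and pairs: "\<And>i j. i < n \<Longrightarrow> j < n \<Longrightarrow> trunc5 (lie_bracket (Bf i) (Bf j)) \<in> Sp Bf n"
  shows "trunc5 (lie_bracket p q) \<in> Sp Bf n"
proof -
  obtain c d where p: "p = (\<lambda>w. \<Sum>k<n. c k * Bf k w)" and q: "q = (\<lambda>w. \<Sum>k<n. d k * Bf k w)"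
    using assms(1,2) unfolding Sp_def by blast
  have "trunc5 (lie_bracket p q) = (\<lambda>w. \<Sum>i<n. \<Sum>j<n. c i * d j * trunc5 (lie_bracket (Bf i) (Bf j)) w)"
    unfolding p q trunc5_def by (rule ext) (simp add: bracket_lin)
  also have "\<dots> \<in> Sp Bf n"
    by (intro Sp_sum Sp_smult pairs) auto
  finally show ?thesis .
qed



definition B0 :: "'k::field ncpoly" where
  "B0 = pl [([X], 1)]"

definition B1 :: "'k::field ncpoly" where
  "B1 = pl [([Y], 1)]"

definition B2 :: "'k::field ncpoly" where
  "B2 = pl [([X,Y], -1), ([Y,X], 1)]"

definition B3 :: "'k::field ncpoly" where
  "B3 = pl [([X,X,Y], -1), ([X,Y,X], 2), ([Y,X,X], -1)]"

definition B4 :: "'k::field ncpoly" where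
  "B4 = pl [([X,Y,Y], 1), ([Y,X,Y], -2), ([Y,Y,X], 1)]"

definition B5 :: "'k::field ncpoly" where
  "B5 = pl [([X,X,X,Y], -1), ([X,X,Y,X], 3), ([X,Y,X,X], -3), ([Y,X,X,X], 1)]"

definition B6 :: "'k::field ncpoly" where
  "B6 = pl [([X,X,Y,Y], 1), ([X,Y,X,Y], -2), ([Y,X,Y,X], 2), ([Y,Y,X,X], -1)]"

definition B7 :: "'k::field ncpoly" where
  "B7 = pl [([X,Y,Y,Y], -1), ([Y,X,Y,Y], 3), ([Y,Y,X,Y], -3), ([Y,Y,Y,X], 1)]"

definition B8 :: "'k::field ncpoly" where
  "B8 = pl [([X,X,X,X,Y], -1), ([X,X,X,Y,X], 4), ([X,X,Y,X,X], -6), ([X,Y,X,X,X], 4), ([Y,X,X,X,X], -1)]"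

definition B9 :: "'k::field ncpoly" where
  "B9 = pl [([X,X,Y,X,Y], -1), ([X,X,Y,Y,X], 1), ([X,Y,X,X,Y], 3), ([X,Y,X,Y,X], -4), ([X,Y,Y,X,X], 1), ([Y,X,X,X,Y], -2), ([Y,X,X,Y,X], 3), ([Y,X,Y,X,X], -1)]"

definition B10 :: "'k::field ncpoly" where
  "B10 = pl [([X,X,X,Y,Y], 1), ([X,X,Y,X,Y], -3), ([X,Y,X,X,Y], 3), ([Y,X,X,X,Y], -2), ([Y,X,X,Y,X], 3), ([Y,X,Y,X,X], -3), ([Y,Y,X,X,X], 1)]"

definition B11 :: "'k::field ncpoly" where
  "B11 = pl [([X,X,Y,Y,Y], -1), ([X,Y,X,Y,Y], 2), ([Y,X,X,Y,Y], 1), ([Y,X,Y,X,Y], -4), ([Y,Y,X,X,Y], 1), ([Y,Y,X,Y,X], 2), ([Y,Y,Y,X,X], -1)]"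

definition B12 :: "'k::field ncpoly" where
  "B12 = pl [([X,Y,X,Y,Y], 1), ([X,Y,Y,X,Y], -3), ([X,Y,Y,Y,X], 2), ([Y,X,X,Y,Y], -1), ([Y,X,Y,X,Y], 4), ([Y,X,Y,Y,X], -3), ([Y,Y,X,X,Y], -1), ([Y,Y,X,Y,X], 1)]"

definition B13 :: "'k::field ncpoly" where
  "B13 = pl [([X,Y,Y,Y,Y], 1), ([Y,X,Y,Y,Y], -4), ([Y,Y,X,Y,Y], 6), ([Y,Y,Y,X,Y], -4), ([Y,Y,Y,Y,X], 1)]"

definition B :: "nat \<Rightarrow> 'k::field ncpoly" where
  "B k = [B0, B1, B2, B3, B4, B5, B6, B7, B8, B9, B10, B11, B12, B13] ! k"

lemma B_simps: "B 0 = B0" "B 1 = B1" "B 2 = B2" "B 3 = B3" "B 4 = B4" "B 5 = B5" "B 6 = B6" "B 7 = B7" "B 8 = B8" "B 9 = B9" "B 10 = B10" "B 11 = B11" "B 12 = B12" "B 13 = B13"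
  by (simp_all add: B_def)

lemmas B_defs = B0_def B1_def B2_def B3_def B4_def B5_def B6_def B7_def B8_def B9_def B10_def B11_def B12_def B13_def

lemma words_1: "words 1 = [[X], [Y]]"
  by (simp add: eval_nat_numeral)

lemma words_2: "words 2 = [[X,X], [X,Y], [Y,X], [Y,Y]]"
  by (simp add: eval_nat_numeral)

lemma words_3: "words 3 = [[X,X,X], [X,X,Y], [X,Y,X], [X,Y,Y], [Y,X,X], [Y,X,Y], [Y,Y,X], [Y,Y,Y]]"
  by (simp add: eval_nat_numeral)

lemma words_4: "words 4 = [[X,X,X,X], [X,X,X,Y], [X,X,Y,X], [X,X,Y,Y], [X,Y,X,X], [X,Y,X,Y], [X,Y,Y,X], [X,Y,Y,Y], [Y,X,X,X], [Y,X,X,Y], [Y,X,Y,X], [Y,X,Y,Y], [Y,Y,X,X], [Y,Y,X,Y], [Y,Y,Y,X], [Y,Y,Y,Y]]"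
  by (simp add: eval_nat_numeral)

lemma words_5: "words 5 = [[X,X,X,X,X], [X,X,X,X,Y], [X,X,X,Y,X], [X,X,X,Y,Y], [X,X,Y,X,X], [X,X,Y,X,Y], [X,X,Y,Y,X], [X,X,Y,Y,Y], [X,Y,X,X,X], [X,Y,X,X,Y], [X,Y,X,Y,X], [X,Y,X,Y,Y], [X,Y,Y,X,X], [X,Y,Y,X,Y], [X,Y,Y,Y,X], [X,Y,Y,Y,Y], [Y,X,X,X,X], [Y,X,X,X,Y], [Y,X,X,Y,X], [Y,X,X,Y,Y], [Y,X,Y,X,X], [Y,X,Y,X,Y], [Y,X,Y,Y,X], [Y,X,Y,Y,Y], [Y,Y,X,X,X], [Y,Y,X,X,Y], [Y,Y,X,Y,X], [Y,Y,X,Y,Y], [Y,Y,Y,X,X], [Y,Y,Y,X,Y], [Y,Y,Y,Y,X], [Y,Y,Y,Y,Y]]"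
  by (simp add: eval_nat_numeral)

lemmas words_num = words_1 words_2 words_3 words_4 words_5

lemma hom_B0: "hom (B 0) 1"
  unfolding B_simps B0_def by (rule hom_pl) simp

lemma hom_B1: "hom (B 1) 1"
  unfolding B_simps B1_def by (rule hom_pl) simp

lemma hom_B2: "hom (B 2) 2"
  unfolding B_simps B2_def by (rule hom_pl) simp

lemma hom_B3: "hom (B 3) 3"
  unfolding B_simps B3_def by (rule hom_pl) simp

lemma hom_B4: "hom (B 4) 3"
  unfolding B_simps B4_def by (rule hom_pl) simp

lemma hom_B5: "hom (B 5) 4"
  unfolding B_simps B5_def by (rule hom_pl) simp

lemma hom_B6: "hom (B 6) 4"
  unfolding B_simps B6_def by (rule hom_pl) simp

lemma hom_B7: "hom (B 7) 4"
  unfolding B_simps B7_def by (rule hom_pl) simp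

lemma hom_B8: "hom (B 8) 5"
  unfolding B_simps B8_def by (rule hom_pl) simp

lemma hom_B9: "hom (B 9) 5"
  unfolding B_simps B9_def by (rule hom_pl) simp

lemma hom_B10: "hom (B 10) 5"
  unfolding B_simps B10_def by (rule hom_pl) simp

lemma hom_B11: "hom (B 11) 5"
  unfolding B_simps B11_def by (rule hom_pl) simp

lemma hom_B12: "hom (B 12) 5"
  unfolding B_simps B12_def by (rule hom_pl) simp

lemma hom_B13: "hom (B 13) 5"
  unfolding B_simps B13_def by (rule hom_pl) simp

lemma P_0_0: "trunc5 (lie_bracket (B 0) (B 0)) \<in> Sp B 14"
proof -
  have h: "hom (lie_bracket (B 0) (B 0)) 2" using hom_bracket[OF hom_B0 hom_B0] by (simp add: eval_nat_numeral)
  have e: "lie_bracket (B 0) (B 0) = (\<lambda>w. 0)"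
  proof (rule ext_check[OF h])
    show "hom (\<lambda>w. 0) 2" by (intro hom_lin hom_zero )
    show "\<forall>w\<in>set (words 2). lie_bracket (B 0) (B 0) w = (\<lambda>w. 0) w"
      unfolding words_num B_simps B_defs by (simp add: pl_def lie_bracket_def)
  qed
  have t: "trunc5 (lie_bracket (B 0) (B 0)) = lie_bracket (B 0) (B 0)" by (rule hom_trunc_le[OF h]) simp
  show ?thesis unfolding t unfolding e by (intro Sp_lin Sp_zero; simp)
qed

lemma P_0_1: "trunc5 (lie_bracket (B 0) (B 1)) \<in> Sp B 14"
proof -
  have h: "hom (lie_bracket (B 0) (B 1)) 2" using hom_bracket[OF hom_B0 hom_B1] by (simp add: eval_nat_numeral)
  have e: "lie_bracket (B 0) (B 1) = (\<lambda>w. (of_int (-1) * B 2 w + 0))"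
  proof (rule ext_check[OF h])
    show "hom (\<lambda>w. (of_int (-1) * B 2 w + 0)) 2" by (intro hom_lin hom_zero hom_B2)
    show "\<forall>w\<in>set (words 2). lie_bracket (B 0) (B 1) w = (\<lambda>w. (of_int (-1) * B 2 w + 0)) w"
      unfolding words_num B_simps B_defs by (simp add: pl_def lie_bracket_def)
  qed
  have t: "trunc5 (lie_bracket (B 0) (B 1)) = lie_bracket (B 0) (B 1)" by (rule hom_trunc_le[OF h]) simp
  show ?thesis unfolding t unfolding e by (intro Sp_lin Sp_zero; simp)
qed

lemma P_0_2: "trunc5 (lie_bracket (B 0) (B 2)) \<in> Sp B 14"
proof -
  have h: "hom (lie_bracket (B 0) (B 2)) 3" using hom_bracket[OF hom_B0 hom_B2] by (simp add: eval_nat_numeral)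
  have e: "lie_bracket (B 0) (B 2) = (\<lambda>w. (of_int (1) * B 3 w + 0))"
  proof (rule ext_check[OF h])
    show "hom (\<lambda>w. (of_int (1) * B 3 w + 0)) 3" by (intro hom_lin hom_zero hom_B3)
    show "\<forall>w\<in>set (words 3). lie_bracket (B 0) (B 2) w = (\<lambda>w. (of_int (1) * B 3 w + 0)) w"
      unfolding words_num B_simps B_defs by (simp add: pl_def lie_bracket_def)
  qed
  have t: "trunc5 (lie_bracket (B 0) (B 2)) = lie_bracket (B 0) (B 2)" by (rule hom_trunc_le[OF h]) simp
  show ?thesis unfolding t unfolding e by (intro Sp_lin Sp_zero; simp)
qed

lemma P_0_3: "trunc5 (lie_bracket (B 0) (B 3)) \<in> Sp B 14"
proof -
  have h: "hom (lie_bracket (B 0) (B 3)) 4" using hom_bracket[OF hom_B0 hom_B3] by (simp add: eval_nat_numeral)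
  have e: "lie_bracket (B 0) (B 3) = (\<lambda>w. (of_int (1) * B 5 w + 0))"
  proof (rule ext_check[OF h])
    show "hom (\<lambda>w. (of_int (1) * B 5 w + 0)) 4" by (intro hom_lin hom_zero hom_B5)
    show "\<forall>w\<in>set (words 4). lie_bracket (B 0) (B 3) w = (\<lambda>w. (of_int (1) * B 5 w + 0)) w"
      unfolding words_num B_simps B_defs by (simp add: pl_def lie_bracket_def)
  qed
  have t: "trunc5 (lie_bracket (B 0) (B 3)) = lie_bracket (B 0) (B 3)" by (rule hom_trunc_le[OF h]) simp
  show ?thesis unfolding t unfolding e by (intro Sp_lin Sp_zero; simp)
qed

lemma P_0_4: "trunc5 (lie_bracket (B 0) (B 4)) \<in> Sp B 14"
proof -
  have h: "hom (lie_bracket (B 0) (B 4)) 4" using hom_bracket[OF hom_B0 hom_B4] by (simp add: eval_nat_numeral)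
  have e: "lie_bracket (B 0) (B 4) = (\<lambda>w. (of_int (1) * B 6 w + 0))"
  proof (rule ext_check[OF h])
    show "hom (\<lambda>w. (of_int (1) * B 6 w + 0)) 4" by (intro hom_lin hom_zero hom_B6)
    show "\<forall>w\<in>set (words 4). lie_bracket (B 0) (B 4) w = (\<lambda>w. (of_int (1) * B 6 w + 0)) w"
      unfolding words_num B_simps B_defs by (simp add: pl_def lie_bracket_def)
  qed
  have t: "trunc5 (lie_bracket (B 0) (B 4)) = lie_bracket (B 0) (B 4)" by (rule hom_trunc_le[OF h]) simp
  show ?thesis unfolding t unfolding e by (intro Sp_lin Sp_zero; simp)
qed

lemma P_0_5: "trunc5 (lie_bracket (B 0) (B 5)) \<in> Sp B 14"
proof -
  have h: "hom (lie_bracket (B 0) (B 5)) 5" using hom_bracket[OF hom_B0 hom_B5] by (simp add: eval_nat_numeral)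
  have e: "lie_bracket (B 0) (B 5) = (\<lambda>w. (of_int (1) * B 8 w + 0))"
  proof (rule ext_check[OF h])
    show "hom (\<lambda>w. (of_int (1) * B 8 w + 0)) 5" by (intro hom_lin hom_zero hom_B8)
    show "\<forall>w\<in>set (words 5). lie_bracket (B 0) (B 5) w = (\<lambda>w. (of_int (1) * B 8 w + 0)) w"
      unfolding words_num B_simps B_defs by (simp add: pl_def lie_bracket_def)
  qed
  have t: "trunc5 (lie_bracket (B 0) (B 5)) = lie_bracket (B 0) (B 5)" by (rule hom_trunc_le[OF h]) simp
  show ?thesis unfolding t unfolding e by (intro Sp_lin Sp_zero; simp)
qed

lemma P_0_6: "trunc5 (lie_bracket (B 0) (B 6)) \<in> Sp B 14"
proof -
  have h: "hom (lie_bracket (B 0) (B 6)) 5" using hom_bracket[OF hom_B0 hom_B6] by (simp add: eval_nat_numeral)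
  have e: "lie_bracket (B 0) (B 6) = (\<lambda>w. (of_int (-1) * B 9 w + (of_int (1) * B 10 w + 0)))"
  proof (rule ext_check[OF h])
    show "hom (\<lambda>w. (of_int (-1) * B 9 w + (of_int (1) * B 10 w + 0))) 5" by (intro hom_lin hom_zero hom_B9 hom_B10)
    show "\<forall>w\<in>set (words 5). lie_bracket (B 0) (B 6) w = (\<lambda>w. (of_int (-1) * B 9 w + (of_int (1) * B 10 w + 0))) w"
      unfolding words_num B_simps B_defs by (simp add: pl_def lie_bracket_def)
  qed
  have t: "trunc5 (lie_bracket (B 0) (B 6)) = lie_bracket (B 0) (B 6)" by (rule hom_trunc_le[OF h]) simp
  show ?thesis unfolding t unfolding e by (intro Sp_lin Sp_zero; simp)
qed

lemma P_0_7: "trunc5 (lie_bracket (B 0) (B 7)) \<in> Sp B 14"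
proof -
  have h: "hom (lie_bracket (B 0) (B 7)) 5" using hom_bracket[OF hom_B0 hom_B7] by (simp add: eval_nat_numeral)
  have e: "lie_bracket (B 0) (B 7) = (\<lambda>w. (of_int (1) * B 11 w + (of_int (1) * B 12 w + 0)))"
  proof (rule ext_check[OF h])
    show "hom (\<lambda>w. (of_int (1) * B 11 w + (of_int (1) * B 12 w + 0))) 5" by (intro hom_lin hom_zero hom_B11 hom_B12)
    show "\<forall>w\<in>set (words 5). lie_bracket (B 0) (B 7) w = (\<lambda>w. (of_int (1) * B 11 w + (of_int (1) * B 12 w + 0))) w"
      unfolding words_num B_simps B_defs by (simp add: pl_def lie_bracket_def)
  qed
  have t: "trunc5 (lie_bracket (B 0) (B 7)) = lie_bracket (B 0) (B 7)" by (rule hom_trunc_le[OF h]) simp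
  show ?thesis unfolding t unfolding e by (intro Sp_lin Sp_zero; simp)
qed

lemma P_0_8: "trunc5 (lie_bracket (B 0) (B 8)) \<in> Sp B 14"
  by (subst hom_trunc_gt[OF hom_bracket[OF hom_B0 hom_B8]]) (simp_all add: Sp_zero')

lemma P_0_9: "trunc5 (lie_bracket (B 0) (B 9)) \<in> Sp B 14"
  by (subst hom_trunc_gt[OF hom_bracket[OF hom_B0 hom_B9]]) (simp_all add: Sp_zero')

lemma P_0_10: "trunc5 (lie_bracket (B 0) (B 10)) \<in> Sp B 14"
  by (subst hom_trunc_gt[OF hom_bracket[OF hom_B0 hom_B10]]) (simp_all add: Sp_zero')

lemma P_0_11: "trunc5 (lie_bracket (B 0) (B 11)) \<in> Sp B 14"
  by (subst hom_trunc_gt[OF hom_bracket[OF hom_B0 hom_B11]]) (simp_all add: Sp_zero')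

lemma P_0_12: "trunc5 (lie_bracket (B 0) (B 12)) \<in> Sp B 14"
  by (subst hom_trunc_gt[OF hom_bracket[OF hom_B0 hom_B12]]) (simp_all add: Sp_zero')

lemma P_0_13: "trunc5 (lie_bracket (B 0) (B 13)) \<in> Sp B 14"
  by (subst hom_trunc_gt[OF hom_bracket[OF hom_B0 hom_B13]]) (simp_all add: Sp_zero')

lemma P_1_0: "trunc5 (lie_bracket (B 1) (B 0)) \<in> Sp B 14"
proof -
  have h: "hom (lie_bracket (B 1) (B 0)) 2" using hom_bracket[OF hom_B1 hom_B0] by (simp add: eval_nat_numeral)
  have e: "lie_bracket (B 1) (B 0) = (\<lambda>w. (of_int (1) * B 2 w + 0))"
  proof (rule ext_check[OF h])
    show "hom (\<lambda>w. (of_int (1) * B 2 w + 0)) 2" by (intro hom_lin hom_zero hom_B2)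
    show "\<forall>w\<in>set (words 2). lie_bracket (B 1) (B 0) w = (\<lambda>w. (of_int (1) * B 2 w + 0)) w"
      unfolding words_num B_simps B_defs by (simp add: pl_def lie_bracket_def)
  qed
  have t: "trunc5 (lie_bracket (B 1) (B 0)) = lie_bracket (B 1) (B 0)" by (rule hom_trunc_le[OF h]) simp
  show ?thesis unfolding t unfolding e by (intro Sp_lin Sp_zero; simp)
qed

lemma P_1_1: "trunc5 (lie_bracket (B 1) (B 1)) \<in> Sp B 14"
proof -
  have h: "hom (lie_bracket (B 1) (B 1)) 2" using hom_bracket[OF hom_B1 hom_B1] by (simp add: eval_nat_numeral)
  have e: "lie_bracket (B 1) (B 1) = (\<lambda>w. 0)"
  proof (rule ext_check[OF h])
    show "hom (\<lambda>w. 0) 2" by (intro hom_lin hom_zero )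
    show "\<forall>w\<in>set (words 2). lie_bracket (B 1) (B 1) w = (\<lambda>w. 0) w"
      unfolding words_num B_simps B_defs by (simp add: pl_def lie_bracket_def)
  qed
  have t: "trunc5 (lie_bracket (B 1) (B 1)) = lie_bracket (B 1) (B 1)" by (rule hom_trunc_le[OF h]) simp
  show ?thesis unfolding t unfolding e by (intro Sp_lin Sp_zero; simp)
qed

lemma P_1_2: "trunc5 (lie_bracket (B 1) (B 2)) \<in> Sp B 14"
proof -
  have h: "hom (lie_bracket (B 1) (B 2)) 3" using hom_bracket[OF hom_B1 hom_B2] by (simp add: eval_nat_numeral)
  have e: "lie_bracket (B 1) (B 2) = (\<lambda>w. (of_int (1) * B 4 w + 0))"
  proof (rule ext_check[OF h])
    show "hom (\<lambda>w. (of_int (1) * B 4 w + 0)) 3" by (intro hom_lin hom_zero hom_B4)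
    show "\<forall>w\<in>set (words 3). lie_bracket (B 1) (B 2) w = (\<lambda>w. (of_int (1) * B 4 w + 0)) w"
      unfolding words_num B_simps B_defs by (simp add: pl_def lie_bracket_def)
  qed
  have t: "trunc5 (lie_bracket (B 1) (B 2)) = lie_bracket (B 1) (B 2)" by (rule hom_trunc_le[OF h]) simp
  show ?thesis unfolding t unfolding e by (intro Sp_lin Sp_zero; simp)
qed

lemma P_1_3: "trunc5 (lie_bracket (B 1) (B 3)) \<in> Sp B 14"
proof -
  have h: "hom (lie_bracket (B 1) (B 3)) 4" using hom_bracket[OF hom_B1 hom_B3] by (simp add: eval_nat_numeral)
  have e: "lie_bracket (B 1) (B 3) = (\<lambda>w. (of_int (1) * B 6 w + 0))"
  proof (rule ext_check[OF h])
    show "hom (\<lambda>w. (of_int (1) * B 6 w + 0)) 4" by (intro hom_lin hom_zero hom_B6)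
    show "\<forall>w\<in>set (words 4). lie_bracket (B 1) (B 3) w = (\<lambda>w. (of_int (1) * B 6 w + 0)) w"
      unfolding words_num B_simps B_defs by (simp add: pl_def lie_bracket_def)
  qed
  have t: "trunc5 (lie_bracket (B 1) (B 3)) = lie_bracket (B 1) (B 3)" by (rule hom_trunc_le[OF h]) simp
  show ?thesis unfolding t unfolding e by (intro Sp_lin Sp_zero; simp)
qed

lemma P_1_4: "trunc5 (lie_bracket (B 1) (B 4)) \<in> Sp B 14"
proof -
  have h: "hom (lie_bracket (B 1) (B 4)) 4" using hom_bracket[OF hom_B1 hom_B4] by (simp add: eval_nat_numeral)
  have e: "lie_bracket (B 1) (B 4) = (\<lambda>w. (of_int (1) * B 7 w + 0))"
  proof (rule ext_check[OF h])
    show "hom (\<lambda>w. (of_int (1) * B 7 w + 0)) 4" by (intro hom_lin hom_zero hom_B7)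
    show "\<forall>w\<in>set (words 4). lie_bracket (B 1) (B 4) w = (\<lambda>w. (of_int (1) * B 7 w + 0)) w"
      unfolding words_num B_simps B_defs by (simp add: pl_def lie_bracket_def)
  qed
  have t: "trunc5 (lie_bracket (B 1) (B 4)) = lie_bracket (B 1) (B 4)" by (rule hom_trunc_le[OF h]) simp
  show ?thesis unfolding t unfolding e by (intro Sp_lin Sp_zero; simp)
qed

lemma P_1_5: "trunc5 (lie_bracket (B 1) (B 5)) \<in> Sp B 14"
proof -
  have h: "hom (lie_bracket (B 1) (B 5)) 5" using hom_bracket[OF hom_B1 hom_B5] by (simp add: eval_nat_numeral)
  have e: "lie_bracket (B 1) (B 5) = (\<lambda>w. (of_int (1) * B 10 w + 0))"
  proof (rule ext_check[OF h])
    show "hom (\<lambda>w. (of_int (1) * B 10 w + 0)) 5" by (intro hom_lin hom_zero hom_B10)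
    show "\<forall>w\<in>set (words 5). lie_bracket (B 1) (B 5) w = (\<lambda>w. (of_int (1) * B 10 w + 0)) w"
      unfolding words_num B_simps B_defs by (simp add: pl_def lie_bracket_def)
  qed
  have t: "trunc5 (lie_bracket (B 1) (B 5)) = lie_bracket (B 1) (B 5)" by (rule hom_trunc_le[OF h]) simp
  show ?thesis unfolding t unfolding e by (intro Sp_lin Sp_zero; simp)
qed

lemma P_1_6: "trunc5 (lie_bracket (B 1) (B 6)) \<in> Sp B 14"
proof -
  have h: "hom (lie_bracket (B 1) (B 6)) 5" using hom_bracket[OF hom_B1 hom_B6] by (simp add: eval_nat_numeral)
  have e: "lie_bracket (B 1) (B 6) = (\<lambda>w. (of_int (1) * B 11 w + 0))"
  proof (rule ext_check[OF h])
    show "hom (\<lambda>w. (of_int (1) * B 11 w + 0)) 5" by (intro hom_lin hom_zero hom_B11)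
    show "\<forall>w\<in>set (words 5). lie_bracket (B 1) (B 6) w = (\<lambda>w. (of_int (1) * B 11 w + 0)) w"
      unfolding words_num B_simps B_defs by (simp add: pl_def lie_bracket_def)
  qed
  have t: "trunc5 (lie_bracket (B 1) (B 6)) = lie_bracket (B 1) (B 6)" by (rule hom_trunc_le[OF h]) simp
  show ?thesis unfolding t unfolding e by (intro Sp_lin Sp_zero; simp)
qed

lemma P_1_7: "trunc5 (lie_bracket (B 1) (B 7)) \<in> Sp B 14"
proof -
  have h: "hom (lie_bracket (B 1) (B 7)) 5" using hom_bracket[OF hom_B1 hom_B7] by (simp add: eval_nat_numeral)
  have e: "lie_bracket (B 1) (B 7) = (\<lambda>w. (of_int (1) * B 13 w + 0))"
  proof (rule ext_check[OF h])
    show "hom (\<lambda>w. (of_int (1) * B 13 w + 0)) 5" by (intro hom_lin hom_zero hom_B13)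
    show "\<forall>w\<in>set (words 5). lie_bracket (B 1) (B 7) w = (\<lambda>w. (of_int (1) * B 13 w + 0)) w"
      unfolding words_num B_simps B_defs by (simp add: pl_def lie_bracket_def)
  qed
  have t: "trunc5 (lie_bracket (B 1) (B 7)) = lie_bracket (B 1) (B 7)" by (rule hom_trunc_le[OF h]) simp
  show ?thesis unfolding t unfolding e by (intro Sp_lin Sp_zero; simp)
qed

lemma P_1_8: "trunc5 (lie_bracket (B 1) (B 8)) \<in> Sp B 14"
  by (subst hom_trunc_gt[OF hom_bracket[OF hom_B1 hom_B8]]) (simp_all add: Sp_zero')

lemma P_1_9: "trunc5 (lie_bracket (B 1) (B 9)) \<in> Sp B 14"
  by (subst hom_trunc_gt[OF hom_bracket[OF hom_B1 hom_B9]]) (simp_all add: Sp_zero')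

lemma P_1_10: "trunc5 (lie_bracket (B 1) (B 10)) \<in> Sp B 14"
  by (subst hom_trunc_gt[OF hom_bracket[OF hom_B1 hom_B10]]) (simp_all add: Sp_zero')

lemma P_1_11: "trunc5 (lie_bracket (B 1) (B 11)) \<in> Sp B 14"
  by (subst hom_trunc_gt[OF hom_bracket[OF hom_B1 hom_B11]]) (simp_all add: Sp_zero')

lemma P_1_12: "trunc5 (lie_bracket (B 1) (B 12)) \<in> Sp B 14"
  by (subst hom_trunc_gt[OF hom_bracket[OF hom_B1 hom_B12]]) (simp_all add: Sp_zero')

lemma P_1_13: "trunc5 (lie_bracket (B 1) (B 13)) \<in> Sp B 14"
  by (subst hom_trunc_gt[OF hom_bracket[OF hom_B1 hom_B13]]) (simp_all add: Sp_zero')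

lemma P_2_0: "trunc5 (lie_bracket (B 2) (B 0)) \<in> Sp B 14"
proof -
  have h: "hom (lie_bracket (B 2) (B 0)) 3" using hom_bracket[OF hom_B2 hom_B0] by (simp add: eval_nat_numeral)
  have e: "lie_bracket (B 2) (B 0) = (\<lambda>w. (of_int (-1) * B 3 w + 0))"
  proof (rule ext_check[OF h])
    show "hom (\<lambda>w. (of_int (-1) * B 3 w + 0)) 3" by (intro hom_lin hom_zero hom_B3)
    show "\<forall>w\<in>set (words 3). lie_bracket (B 2) (B 0) w = (\<lambda>w. (of_int (-1) * B 3 w + 0)) w"
      unfolding words_num B_simps B_defs by (simp add: pl_def lie_bracket_def)
  qed
  have t: "trunc5 (lie_bracket (B 2) (B 0)) = lie_bracket (B 2) (B 0)" by (rule hom_trunc_le[OF h]) simp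
  show ?thesis unfolding t unfolding e by (intro Sp_lin Sp_zero; simp)
qed

lemma P_2_1: "trunc5 (lie_bracket (B 2) (B 1)) \<in> Sp B 14"
proof -
  have h: "hom (lie_bracket (B 2) (B 1)) 3" using hom_bracket[OF hom_B2 hom_B1] by (simp add: eval_nat_numeral)
  have e: "lie_bracket (B 2) (B 1) = (\<lambda>w. (of_int (-1) * B 4 w + 0))"
  proof (rule ext_check[OF h])
    show "hom (\<lambda>w. (of_int (-1) * B 4 w + 0)) 3" by (intro hom_lin hom_zero hom_B4)
    show "\<forall>w\<in>set (words 3). lie_bracket (B 2) (B 1) w = (\<lambda>w. (of_int (-1) * B 4 w + 0)) w"
      unfolding words_num B_simps B_defs by (simp add: pl_def lie_bracket_def)
  qed
  have t: "trunc5 (lie_bracket (B 2) (B 1)) = lie_bracket (B 2) (B 1)" by (rule hom_trunc_le[OF h]) simp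
  show ?thesis unfolding t unfolding e by (intro Sp_lin Sp_zero; simp)
qed

lemma P_2_2: "trunc5 (lie_bracket (B 2) (B 2)) \<in> Sp B 14"
proof -
  have h: "hom (lie_bracket (B 2) (B 2)) 4" using hom_bracket[OF hom_B2 hom_B2] by (simp add: eval_nat_numeral)
  have e: "lie_bracket (B 2) (B 2) = (\<lambda>w. 0)"
  proof (rule ext_check[OF h])
    show "hom (\<lambda>w. 0) 4" by (intro hom_lin hom_zero )
    show "\<forall>w\<in>set (words 4). lie_bracket (B 2) (B 2) w = (\<lambda>w. 0) w"
      unfolding words_num B_simps B_defs by (simp add: pl_def lie_bracket_def)
  qed
  have t: "trunc5 (lie_bracket (B 2) (B 2)) = lie_bracket (B 2) (B 2)" by (rule hom_trunc_le[OF h]) simp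
  show ?thesis unfolding t unfolding e by (intro Sp_lin Sp_zero; simp)
qed

lemma P_2_3: "trunc5 (lie_bracket (B 2) (B 3)) \<in> Sp B 14"
proof -
  have h: "hom (lie_bracket (B 2) (B 3)) 5" using hom_bracket[OF hom_B2 hom_B3] by (simp add: eval_nat_numeral)
  have e: "lie_bracket (B 2) (B 3) = (\<lambda>w. (of_int (1) * B 9 w + 0))"
  proof (rule ext_check[OF h])
    show "hom (\<lambda>w. (of_int (1) * B 9 w + 0)) 5" by (intro hom_lin hom_zero hom_B9)
    show "\<forall>w\<in>set (words 5). lie_bracket (B 2) (B 3) w = (\<lambda>w. (of_int (1) * B 9 w + 0)) w"
      unfolding words_num B_simps B_defs by (simp add: pl_def lie_bracket_def)
  qed
  have t: "trunc5 (lie_bracket (B 2) (B 3)) = lie_bracket (B 2) (B 3)" by (rule hom_trunc_le[OF h]) simp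
  show ?thesis unfolding t unfolding e by (intro Sp_lin Sp_zero; simp)
qed

lemma P_2_4: "trunc5 (lie_bracket (B 2) (B 4)) \<in> Sp B 14"
proof -
  have h: "hom (lie_bracket (B 2) (B 4)) 5" using hom_bracket[OF hom_B2 hom_B4] by (simp add: eval_nat_numeral)
  have e: "lie_bracket (B 2) (B 4) = (\<lambda>w. (of_int (-1) * B 12 w + 0))"
  proof (rule ext_check[OF h])
    show "hom (\<lambda>w. (of_int (-1) * B 12 w + 0)) 5" by (intro hom_lin hom_zero hom_B12)
    show "\<forall>w\<in>set (words 5). lie_bracket (B 2) (B 4) w = (\<lambda>w. (of_int (-1) * B 12 w + 0)) w"
      unfolding words_num B_simps B_defs by (simp add: pl_def lie_bracket_def)
  qed
  have t: "trunc5 (lie_bracket (B 2) (B 4)) = lie_bracket (B 2) (B 4)" by (rule hom_trunc_le[OF h]) simp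
  show ?thesis unfolding t unfolding e by (intro Sp_lin Sp_zero; simp)
qed

lemma P_2_5: "trunc5 (lie_bracket (B 2) (B 5)) \<in> Sp B 14"
  by (subst hom_trunc_gt[OF hom_bracket[OF hom_B2 hom_B5]]) (simp_all add: Sp_zero')

lemma P_2_6: "trunc5 (lie_bracket (B 2) (B 6)) \<in> Sp B 14"
  by (subst hom_trunc_gt[OF hom_bracket[OF hom_B2 hom_B6]]) (simp_all add: Sp_zero')

lemma P_2_7: "trunc5 (lie_bracket (B 2) (B 7)) \<in> Sp B 14"
  by (subst hom_trunc_gt[OF hom_bracket[OF hom_B2 hom_B7]]) (simp_all add: Sp_zero')

lemma P_2_8: "trunc5 (lie_bracket (B 2) (B 8)) \<in> Sp B 14"
  by (subst hom_trunc_gt[OF hom_bracket[OF hom_B2 hom_B8]]) (simp_all add: Sp_zero')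

lemma P_2_9: "trunc5 (lie_bracket (B 2) (B 9)) \<in> Sp B 14"
  by (subst hom_trunc_gt[OF hom_bracket[OF hom_B2 hom_B9]]) (simp_all add: Sp_zero')

lemma P_2_10: "trunc5 (lie_bracket (B 2) (B 10)) \<in> Sp B 14"
  by (subst hom_trunc_gt[OF hom_bracket[OF hom_B2 hom_B10]]) (simp_all add: Sp_zero')

lemma P_2_11: "trunc5 (lie_bracket (B 2) (B 11)) \<in> Sp B 14"
  by (subst hom_trunc_gt[OF hom_bracket[OF hom_B2 hom_B11]]) (simp_all add: Sp_zero')

lemma P_2_12: "trunc5 (lie_bracket (B 2) (B 12)) \<in> Sp B 14"
  by (subst hom_trunc_gt[OF hom_bracket[OF hom_B2 hom_B12]]) (simp_all add: Sp_zero')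

lemma P_2_13: "trunc5 (lie_bracket (B 2) (B 13)) \<in> Sp B 14"
  by (subst hom_trunc_gt[OF hom_bracket[OF hom_B2 hom_B13]]) (simp_all add: Sp_zero')

lemma P_3_0: "trunc5 (lie_bracket (B 3) (B 0)) \<in> Sp B 14"
proof -
  have h: "hom (lie_bracket (B 3) (B 0)) 4" using hom_bracket[OF hom_B3 hom_B0] by (simp add: eval_nat_numeral)
  have e: "lie_bracket (B 3) (B 0) = (\<lambda>w. (of_int (-1) * B 5 w + 0))"
  proof (rule ext_check[OF h])
    show "hom (\<lambda>w. (of_int (-1) * B 5 w + 0)) 4" by (intro hom_lin hom_zero hom_B5)
    show "\<forall>w\<in>set (words 4). lie_bracket (B 3) (B 0) w = (\<lambda>w. (of_int (-1) * B 5 w + 0)) w"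
      unfolding words_num B_simps B_defs by (simp add: pl_def lie_bracket_def)
  qed
  have t: "trunc5 (lie_bracket (B 3) (B 0)) = lie_bracket (B 3) (B 0)" by (rule hom_trunc_le[OF h]) simp
  show ?thesis unfolding t unfolding e by (intro Sp_lin Sp_zero; simp)
qed

lemma P_3_1: "trunc5 (lie_bracket (B 3) (B 1)) \<in> Sp B 14"
proof -
  have h: "hom (lie_bracket (B 3) (B 1)) 4" using hom_bracket[OF hom_B3 hom_B1] by (simp add: eval_nat_numeral)
  have e: "lie_bracket (B 3) (B 1) = (\<lambda>w. (of_int (-1) * B 6 w + 0))"
  proof (rule ext_check[OF h])
    show "hom (\<lambda>w. (of_int (-1) * B 6 w + 0)) 4" by (intro hom_lin hom_zero hom_B6)
    show "\<forall>w\<in>set (words 4). lie_bracket (B 3) (B 1) w = (\<lambda>w. (of_int (-1) * B 6 w + 0)) w"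
      unfolding words_num B_simps B_defs by (simp add: pl_def lie_bracket_def)
  qed
  have t: "trunc5 (lie_bracket (B 3) (B 1)) = lie_bracket (B 3) (B 1)" by (rule hom_trunc_le[OF h]) simp
  show ?thesis unfolding t unfolding e by (intro Sp_lin Sp_zero; simp)
qed

lemma P_3_2: "trunc5 (lie_bracket (B 3) (B 2)) \<in> Sp B 14"
proof -
  have h: "hom (lie_bracket (B 3) (B 2)) 5" using hom_bracket[OF hom_B3 hom_B2] by (simp add: eval_nat_numeral)
  have e: "lie_bracket (B 3) (B 2) = (\<lambda>w. (of_int (-1) * B 9 w + 0))"
  proof (rule ext_check[OF h])
    show "hom (\<lambda>w. (of_int (-1) * B 9 w + 0)) 5" by (intro hom_lin hom_zero hom_B9)
    show "\<forall>w\<in>set (words 5). lie_bracket (B 3) (B 2) w = (\<lambda>w. (of_int (-1) * B 9 w + 0)) w"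
      unfolding words_num B_simps B_defs by (simp add: pl_def lie_bracket_def)
  qed
  have t: "trunc5 (lie_bracket (B 3) (B 2)) = lie_bracket (B 3) (B 2)" by (rule hom_trunc_le[OF h]) simp
  show ?thesis unfolding t unfolding e by (intro Sp_lin Sp_zero; simp)
qed

lemma P_3_3: "trunc5 (lie_bracket (B 3) (B 3)) \<in> Sp B 14"
  by (subst hom_trunc_gt[OF hom_bracket[OF hom_B3 hom_B3]]) (simp_all add: Sp_zero')

lemma P_3_4: "trunc5 (lie_bracket (B 3) (B 4)) \<in> Sp B 14"
  by (subst hom_trunc_gt[OF hom_bracket[OF hom_B3 hom_B4]]) (simp_all add: Sp_zero')

lemma P_3_5: "trunc5 (lie_bracket (B 3) (B 5)) \<in> Sp B 14"
  by (subst hom_trunc_gt[OF hom_bracket[OF hom_B3 hom_B5]]) (simp_all add: Sp_zero')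

lemma P_3_6: "trunc5 (lie_bracket (B 3) (B 6)) \<in> Sp B 14"
  by (subst hom_trunc_gt[OF hom_bracket[OF hom_B3 hom_B6]]) (simp_all add: Sp_zero')

lemma P_3_7: "trunc5 (lie_bracket (B 3) (B 7)) \<in> Sp B 14"
  by (subst hom_trunc_gt[OF hom_bracket[OF hom_B3 hom_B7]]) (simp_all add: Sp_zero')

lemma P_3_8: "trunc5 (lie_bracket (B 3) (B 8)) \<in> Sp B 14"
  by (subst hom_trunc_gt[OF hom_bracket[OF hom_B3 hom_B8]]) (simp_all add: Sp_zero')

lemma P_3_9: "trunc5 (lie_bracket (B 3) (B 9)) \<in> Sp B 14"
  by (subst hom_trunc_gt[OF hom_bracket[OF hom_B3 hom_B9]]) (simp_all add: Sp_zero')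

lemma P_3_10: "trunc5 (lie_bracket (B 3) (B 10)) \<in> Sp B 14"
  by (subst hom_trunc_gt[OF hom_bracket[OF hom_B3 hom_B10]]) (simp_all add: Sp_zero')

lemma P_3_11: "trunc5 (lie_bracket (B 3) (B 11)) \<in> Sp B 14"
  by (subst hom_trunc_gt[OF hom_bracket[OF hom_B3 hom_B11]]) (simp_all add: Sp_zero')

lemma P_3_12: "trunc5 (lie_bracket (B 3) (B 12)) \<in> Sp B 14"
  by (subst hom_trunc_gt[OF hom_bracket[OF hom_B3 hom_B12]]) (simp_all add: Sp_zero')

lemma P_3_13: "trunc5 (lie_bracket (B 3) (B 13)) \<in> Sp B 14"
  by (subst hom_trunc_gt[OF hom_bracket[OF hom_B3 hom_B13]]) (simp_all add: Sp_zero')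

lemma P_4_0: "trunc5 (lie_bracket (B 4) (B 0)) \<in> Sp B 14"
proof -
  have h: "hom (lie_bracket (B 4) (B 0)) 4" using hom_bracket[OF hom_B4 hom_B0] by (simp add: eval_nat_numeral)
  have e: "lie_bracket (B 4) (B 0) = (\<lambda>w. (of_int (-1) * B 6 w + 0))"
  proof (rule ext_check[OF h])
    show "hom (\<lambda>w. (of_int (-1) * B 6 w + 0)) 4" by (intro hom_lin hom_zero hom_B6)
    show "\<forall>w\<in>set (words 4). lie_bracket (B 4) (B 0) w = (\<lambda>w. (of_int (-1) * B 6 w + 0)) w"
      unfolding words_num B_simps B_defs by (simp add: pl_def lie_bracket_def)
  qed
  have t: "trunc5 (lie_bracket (B 4) (B 0)) = lie_bracket (B 4) (B 0)" by (rule hom_trunc_le[OF h]) simp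
  show ?thesis unfolding t unfolding e by (intro Sp_lin Sp_zero; simp)
qed

lemma P_4_1: "trunc5 (lie_bracket (B 4) (B 1)) \<in> Sp B 14"
proof -
  have h: "hom (lie_bracket (B 4) (B 1)) 4" using hom_bracket[OF hom_B4 hom_B1] by (simp add: eval_nat_numeral)
  have e: "lie_bracket (B 4) (B 1) = (\<lambda>w. (of_int (-1) * B 7 w + 0))"
  proof (rule ext_check[OF h])
    show "hom (\<lambda>w. (of_int (-1) * B 7 w + 0)) 4" by (intro hom_lin hom_zero hom_B7)
    show "\<forall>w\<in>set (words 4). lie_bracket (B 4) (B 1) w = (\<lambda>w. (of_int (-1) * B 7 w + 0)) w"
      unfolding words_num B_simps B_defs by (simp add: pl_def lie_bracket_def)
  qed
  have t: "trunc5 (lie_bracket (B 4) (B 1)) = lie_bracket (B 4) (B 1)" by (rule hom_trunc_le[OF h]) simp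
  show ?thesis unfolding t unfolding e by (intro Sp_lin Sp_zero; simp)
qed

lemma P_4_2: "trunc5 (lie_bracket (B 4) (B 2)) \<in> Sp B 14"
proof -
  have h: "hom (lie_bracket (B 4) (B 2)) 5" using hom_bracket[OF hom_B4 hom_B2] by (simp add: eval_nat_numeral)
  have e: "lie_bracket (B 4) (B 2) = (\<lambda>w. (of_int (1) * B 12 w + 0))"
  proof (rule ext_check[OF h])
    show "hom (\<lambda>w. (of_int (1) * B 12 w + 0)) 5" by (intro hom_lin hom_zero hom_B12)
    show "\<forall>w\<in>set (words 5). lie_bracket (B 4) (B 2) w = (\<lambda>w. (of_int (1) * B 12 w + 0)) w"
      unfolding words_num B_simps B_defs by (simp add: pl_def lie_bracket_def)
  qed
  have t: "trunc5 (lie_bracket (B 4) (B 2)) = lie_bracket (B 4) (B 2)" by (rule hom_trunc_le[OF h]) simp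
  show ?thesis unfolding t unfolding e by (intro Sp_lin Sp_zero; simp)
qed

lemma P_4_3: "trunc5 (lie_bracket (B 4) (B 3)) \<in> Sp B 14"
  by (subst hom_trunc_gt[OF hom_bracket[OF hom_B4 hom_B3]]) (simp_all add: Sp_zero')

lemma P_4_4: "trunc5 (lie_bracket (B 4) (B 4)) \<in> Sp B 14"
  by (subst hom_trunc_gt[OF hom_bracket[OF hom_B4 hom_B4]]) (simp_all add: Sp_zero')

lemma P_4_5: "trunc5 (lie_bracket (B 4) (B 5)) \<in> Sp B 14"
  by (subst hom_trunc_gt[OF hom_bracket[OF hom_B4 hom_B5]]) (simp_all add: Sp_zero')

lemma P_4_6: "trunc5 (lie_bracket (B 4) (B 6)) \<in> Sp B 14"
  by (subst hom_trunc_gt[OF hom_bracket[OF hom_B4 hom_B6]]) (simp_all add: Sp_zero')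

lemma P_4_7: "trunc5 (lie_bracket (B 4) (B 7)) \<in> Sp B 14"
  by (subst hom_trunc_gt[OF hom_bracket[OF hom_B4 hom_B7]]) (simp_all add: Sp_zero')

lemma P_4_8: "trunc5 (lie_bracket (B 4) (B 8)) \<in> Sp B 14"
  by (subst hom_trunc_gt[OF hom_bracket[OF hom_B4 hom_B8]]) (simp_all add: Sp_zero')

lemma P_4_9: "trunc5 (lie_bracket (B 4) (B 9)) \<in> Sp B 14"
  by (subst hom_trunc_gt[OF hom_bracket[OF hom_B4 hom_B9]]) (simp_all add: Sp_zero')

lemma P_4_10: "trunc5 (lie_bracket (B 4) (B 10)) \<in> Sp B 14"
  by (subst hom_trunc_gt[OF hom_bracket[OF hom_B4 hom_B10]]) (simp_all add: Sp_zero')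

lemma P_4_11: "trunc5 (lie_bracket (B 4) (B 11)) \<in> Sp B 14"
  by (subst hom_trunc_gt[OF hom_bracket[OF hom_B4 hom_B11]]) (simp_all add: Sp_zero')

lemma P_4_12: "trunc5 (lie_bracket (B 4) (B 12)) \<in> Sp B 14"
  by (subst hom_trunc_gt[OF hom_bracket[OF hom_B4 hom_B12]]) (simp_all add: Sp_zero')

lemma P_4_13: "trunc5 (lie_bracket (B 4) (B 13)) \<in> Sp B 14"
  by (subst hom_trunc_gt[OF hom_bracket[OF hom_B4 hom_B13]]) (simp_all add: Sp_zero')

lemma P_5_0: "trunc5 (lie_bracket (B 5) (B 0)) \<in> Sp B 14"
proof -
  have h: "hom (lie_bracket (B 5) (B 0)) 5" using hom_bracket[OF hom_B5 hom_B0] by (simp add: eval_nat_numeral)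
  have e: "lie_bracket (B 5) (B 0) = (\<lambda>w. (of_int (-1) * B 8 w + 0))"
  proof (rule ext_check[OF h])
    show "hom (\<lambda>w. (of_int (-1) * B 8 w + 0)) 5" by (intro hom_lin hom_zero hom_B8)
    show "\<forall>w\<in>set (words 5). lie_bracket (B 5) (B 0) w = (\<lambda>w. (of_int (-1) * B 8 w + 0)) w"
      unfolding words_num B_simps B_defs by (simp add: pl_def lie_bracket_def)
  qed
  have t: "trunc5 (lie_bracket (B 5) (B 0)) = lie_bracket (B 5) (B 0)" by (rule hom_trunc_le[OF h]) simp
  show ?thesis unfolding t unfolding e by (intro Sp_lin Sp_zero; simp)
qed

lemma P_5_1: "trunc5 (lie_bracket (B 5) (B 1)) \<in> Sp B 14"
proof -
  have h: "hom (lie_bracket (B 5) (B 1)) 5" using hom_bracket[OF hom_B5 hom_B1] by (simp add: eval_nat_numeral)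
  have e: "lie_bracket (B 5) (B 1) = (\<lambda>w. (of_int (-1) * B 10 w + 0))"
  proof (rule ext_check[OF h])
    show "hom (\<lambda>w. (of_int (-1) * B 10 w + 0)) 5" by (intro hom_lin hom_zero hom_B10)
    show "\<forall>w\<in>set (words 5). lie_bracket (B 5) (B 1) w = (\<lambda>w. (of_int (-1) * B 10 w + 0)) w"
      unfolding words_num B_simps B_defs by (simp add: pl_def lie_bracket_def)
  qed
  have t: "trunc5 (lie_bracket (B 5) (B 1)) = lie_bracket (B 5) (B 1)" by (rule hom_trunc_le[OF h]) simp
  show ?thesis unfolding t unfolding e by (intro Sp_lin Sp_zero; simp)
qed

lemma P_5_2: "trunc5 (lie_bracket (B 5) (B 2)) \<in> Sp B 14"
  by (subst hom_trunc_gt[OF hom_bracket[OF hom_B5 hom_B2]]) (simp_all add: Sp_zero')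

lemma P_5_3: "trunc5 (lie_bracket (B 5) (B 3)) \<in> Sp B 14"
  by (subst hom_trunc_gt[OF hom_bracket[OF hom_B5 hom_B3]]) (simp_all add: Sp_zero')

lemma P_5_4: "trunc5 (lie_bracket (B 5) (B 4)) \<in> Sp B 14"
  by (subst hom_trunc_gt[OF hom_bracket[OF hom_B5 hom_B4]]) (simp_all add: Sp_zero')

lemma P_5_5: "trunc5 (lie_bracket (B 5) (B 5)) \<in> Sp B 14"
  by (subst hom_trunc_gt[OF hom_bracket[OF hom_B5 hom_B5]]) (simp_all add: Sp_zero')

lemma P_5_6: "trunc5 (lie_bracket (B 5) (B 6)) \<in> Sp B 14"
  by (subst hom_trunc_gt[OF hom_bracket[OF hom_B5 hom_B6]]) (simp_all add: Sp_zero')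

lemma P_5_7: "trunc5 (lie_bracket (B 5) (B 7)) \<in> Sp B 14"
  by (subst hom_trunc_gt[OF hom_bracket[OF hom_B5 hom_B7]]) (simp_all add: Sp_zero')

lemma P_5_8: "trunc5 (lie_bracket (B 5) (B 8)) \<in> Sp B 14"
  by (subst hom_trunc_gt[OF hom_bracket[OF hom_B5 hom_B8]]) (simp_all add: Sp_zero')

lemma P_5_9: "trunc5 (lie_bracket (B 5) (B 9)) \<in> Sp B 14"
  by (subst hom_trunc_gt[OF hom_bracket[OF hom_B5 hom_B9]]) (simp_all add: Sp_zero')

lemma P_5_10: "trunc5 (lie_bracket (B 5) (B 10)) \<in> Sp B 14"
  by (subst hom_trunc_gt[OF hom_bracket[OF hom_B5 hom_B10]]) (simp_all add: Sp_zero')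

lemma P_5_11: "trunc5 (lie_bracket (B 5) (B 11)) \<in> Sp B 14"
  by (subst hom_trunc_gt[OF hom_bracket[OF hom_B5 hom_B11]]) (simp_all add: Sp_zero')

lemma P_5_12: "trunc5 (lie_bracket (B 5) (B 12)) \<in> Sp B 14"
  by (subst hom_trunc_gt[OF hom_bracket[OF hom_B5 hom_B12]]) (simp_all add: Sp_zero')

lemma P_5_13: "trunc5 (lie_bracket (B 5) (B 13)) \<in> Sp B 14"
  by (subst hom_trunc_gt[OF hom_bracket[OF hom_B5 hom_B13]]) (simp_all add: Sp_zero')

lemma P_6_0: "trunc5 (lie_bracket (B 6) (B 0)) \<in> Sp B 14"
proof -
  have h: "hom (lie_bracket (B 6) (B 0)) 5" using hom_bracket[OF hom_B6 hom_B0] by (simp add: eval_nat_numeral)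
  have e: "lie_bracket (B 6) (B 0) = (\<lambda>w. (of_int (1) * B 9 w + (of_int (-1) * B 10 w + 0)))"
  proof (rule ext_check[OF h])
    show "hom (\<lambda>w. (of_int (1) * B 9 w + (of_int (-1) * B 10 w + 0))) 5" by (intro hom_lin hom_zero hom_B9 hom_B10)
    show "\<forall>w\<in>set (words 5). lie_bracket (B 6) (B 0) w = (\<lambda>w. (of_int (1) * B 9 w + (of_int (-1) * B 10 w + 0))) w"
      unfolding words_num B_simps B_defs by (simp add: pl_def lie_bracket_def)
  qed
  have t: "trunc5 (lie_bracket (B 6) (B 0)) = lie_bracket (B 6) (B 0)" by (rule hom_trunc_le[OF h]) simp
  show ?thesis unfolding t unfolding e by (intro Sp_lin Sp_zero; simp)
qed

lemma P_6_1: "trunc5 (lie_bracket (B 6) (B 1)) \<in> Sp B 14"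
proof -
  have h: "hom (lie_bracket (B 6) (B 1)) 5" using hom_bracket[OF hom_B6 hom_B1] by (simp add: eval_nat_numeral)
  have e: "lie_bracket (B 6) (B 1) = (\<lambda>w. (of_int (-1) * B 11 w + 0))"
  proof (rule ext_check[OF h])
    show "hom (\<lambda>w. (of_int (-1) * B 11 w + 0)) 5" by (intro hom_lin hom_zero hom_B11)
    show "\<forall>w\<in>set (words 5). lie_bracket (B 6) (B 1) w = (\<lambda>w. (of_int (-1) * B 11 w + 0)) w"
      unfolding words_num B_simps B_defs by (simp add: pl_def lie_bracket_def)
  qed
  have t: "trunc5 (lie_bracket (B 6) (B 1)) = lie_bracket (B 6) (B 1)" by (rule hom_trunc_le[OF h]) simp
  show ?thesis unfolding t unfolding e by (intro Sp_lin Sp_zero; simp)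
qed

lemma P_6_2: "trunc5 (lie_bracket (B 6) (B 2)) \<in> Sp B 14"
  by (subst hom_trunc_gt[OF hom_bracket[OF hom_B6 hom_B2]]) (simp_all add: Sp_zero')

lemma P_6_3: "trunc5 (lie_bracket (B 6) (B 3)) \<in> Sp B 14"
  by (subst hom_trunc_gt[OF hom_bracket[OF hom_B6 hom_B3]]) (simp_all add: Sp_zero')

lemma P_6_4: "trunc5 (lie_bracket (B 6) (B 4)) \<in> Sp B 14"
  by (subst hom_trunc_gt[OF hom_bracket[OF hom_B6 hom_B4]]) (simp_all add: Sp_zero')

lemma P_6_5: "trunc5 (lie_bracket (B 6) (B 5)) \<in> Sp B 14"
  by (subst hom_trunc_gt[OF hom_bracket[OF hom_B6 hom_B5]]) (simp_all add: Sp_zero')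

lemma P_6_6: "trunc5 (lie_bracket (B 6) (B 6)) \<in> Sp B 14"
  by (subst hom_trunc_gt[OF hom_bracket[OF hom_B6 hom_B6]]) (simp_all add: Sp_zero')

lemma P_6_7: "trunc5 (lie_bracket (B 6) (B 7)) \<in> Sp B 14"
  by (subst hom_trunc_gt[OF hom_bracket[OF hom_B6 hom_B7]]) (simp_all add: Sp_zero')

lemma P_6_8: "trunc5 (lie_bracket (B 6) (B 8)) \<in> Sp B 14"
  by (subst hom_trunc_gt[OF hom_bracket[OF hom_B6 hom_B8]]) (simp_all add: Sp_zero')

lemma P_6_9: "trunc5 (lie_bracket (B 6) (B 9)) \<in> Sp B 14"
  by (subst hom_trunc_gt[OF hom_bracket[OF hom_B6 hom_B9]]) (simp_all add: Sp_zero')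

lemma P_6_10: "trunc5 (lie_bracket (B 6) (B 10)) \<in> Sp B 14"
  by (subst hom_trunc_gt[OF hom_bracket[OF hom_B6 hom_B10]]) (simp_all add: Sp_zero')

lemma P_6_11: "trunc5 (lie_bracket (B 6) (B 11)) \<in> Sp B 14"
  by (subst hom_trunc_gt[OF hom_bracket[OF hom_B6 hom_B11]]) (simp_all add: Sp_zero')

lemma P_6_12: "trunc5 (lie_bracket (B 6) (B 12)) \<in> Sp B 14"
  by (subst hom_trunc_gt[OF hom_bracket[OF hom_B6 hom_B12]]) (simp_all add: Sp_zero')

lemma P_6_13: "trunc5 (lie_bracket (B 6) (B 13)) \<in> Sp B 14"
  by (subst hom_trunc_gt[OF hom_bracket[OF hom_B6 hom_B13]]) (simp_all add: Sp_zero')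

lemma P_7_0: "trunc5 (lie_bracket (B 7) (B 0)) \<in> Sp B 14"
proof -
  have h: "hom (lie_bracket (B 7) (B 0)) 5" using hom_bracket[OF hom_B7 hom_B0] by (simp add: eval_nat_numeral)
  have e: "lie_bracket (B 7) (B 0) = (\<lambda>w. (of_int (-1) * B 11 w + (of_int (-1) * B 12 w + 0)))"
  proof (rule ext_check[OF h])
    show "hom (\<lambda>w. (of_int (-1) * B 11 w + (of_int (-1) * B 12 w + 0))) 5" by (intro hom_lin hom_zero hom_B11 hom_B12)
    show "\<forall>w\<in>set (words 5). lie_bracket (B 7) (B 0) w = (\<lambda>w. (of_int (-1) * B 11 w + (of_int (-1) * B 12 w + 0))) w"
      unfolding words_num B_simps B_defs by (simp add: pl_def lie_bracket_def)
  qed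
  have t: "trunc5 (lie_bracket (B 7) (B 0)) = lie_bracket (B 7) (B 0)" by (rule hom_trunc_le[OF h]) simp
  show ?thesis unfolding t unfolding e by (intro Sp_lin Sp_zero; simp)
qed

lemma P_7_1: "trunc5 (lie_bracket (B 7) (B 1)) \<in> Sp B 14"
proof -
  have h: "hom (lie_bracket (B 7) (B 1)) 5" using hom_bracket[OF hom_B7 hom_B1] by (simp add: eval_nat_numeral)
  have e: "lie_bracket (B 7) (B 1) = (\<lambda>w. (of_int (-1) * B 13 w + 0))"
  proof (rule ext_check[OF h])
    show "hom (\<lambda>w. (of_int (-1) * B 13 w + 0)) 5" by (intro hom_lin hom_zero hom_B13)
    show "\<forall>w\<in>set (words 5). lie_bracket (B 7) (B 1) w = (\<lambda>w. (of_int (-1) * B 13 w + 0)) w"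
      unfolding words_num B_simps B_defs by (simp add: pl_def lie_bracket_def)
  qed
  have t: "trunc5 (lie_bracket (B 7) (B 1)) = lie_bracket (B 7) (B 1)" by (rule hom_trunc_le[OF h]) simp
  show ?thesis unfolding t unfolding e by (intro Sp_lin Sp_zero; simp)
qed

lemma P_7_2: "trunc5 (lie_bracket (B 7) (B 2)) \<in> Sp B 14"
  by (subst hom_trunc_gt[OF hom_bracket[OF hom_B7 hom_B2]]) (simp_all add: Sp_zero')

lemma P_7_3: "trunc5 (lie_bracket (B 7) (B 3)) \<in> Sp B 14"
  by (subst hom_trunc_gt[OF hom_bracket[OF hom_B7 hom_B3]]) (simp_all add: Sp_zero')

lemma P_7_4: "trunc5 (lie_bracket (B 7) (B 4)) \<in> Sp B 14"
  by (subst hom_trunc_gt[OF hom_bracket[OF hom_B7 hom_B4]]) (simp_all add: Sp_zero')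

lemma P_7_5: "trunc5 (lie_bracket (B 7) (B 5)) \<in> Sp B 14"
  by (subst hom_trunc_gt[OF hom_bracket[OF hom_B7 hom_B5]]) (simp_all add: Sp_zero')

lemma P_7_6: "trunc5 (lie_bracket (B 7) (B 6)) \<in> Sp B 14"
  by (subst hom_trunc_gt[OF hom_bracket[OF hom_B7 hom_B6]]) (simp_all add: Sp_zero')

lemma P_7_7: "trunc5 (lie_bracket (B 7) (B 7)) \<in> Sp B 14"
  by (subst hom_trunc_gt[OF hom_bracket[OF hom_B7 hom_B7]]) (simp_all add: Sp_zero')

lemma P_7_8: "trunc5 (lie_bracket (B 7) (B 8)) \<in> Sp B 14"
  by (subst hom_trunc_gt[OF hom_bracket[OF hom_B7 hom_B8]]) (simp_all add: Sp_zero')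

lemma P_7_9: "trunc5 (lie_bracket (B 7) (B 9)) \<in> Sp B 14"
  by (subst hom_trunc_gt[OF hom_bracket[OF hom_B7 hom_B9]]) (simp_all add: Sp_zero')

lemma P_7_10: "trunc5 (lie_bracket (B 7) (B 10)) \<in> Sp B 14"
  by (subst hom_trunc_gt[OF hom_bracket[OF hom_B7 hom_B10]]) (simp_all add: Sp_zero')

lemma P_7_11: "trunc5 (lie_bracket (B 7) (B 11)) \<in> Sp B 14"
  by (subst hom_trunc_gt[OF hom_bracket[OF hom_B7 hom_B11]]) (simp_all add: Sp_zero')

lemma P_7_12: "trunc5 (lie_bracket (B 7) (B 12)) \<in> Sp B 14"
  by (subst hom_trunc_gt[OF hom_bracket[OF hom_B7 hom_B12]]) (simp_all add: Sp_zero')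

lemma P_7_13: "trunc5 (lie_bracket (B 7) (B 13)) \<in> Sp B 14"
  by (subst hom_trunc_gt[OF hom_bracket[OF hom_B7 hom_B13]]) (simp_all add: Sp_zero')

lemma P_8_0: "trunc5 (lie_bracket (B 8) (B 0)) \<in> Sp B 14"
  by (subst hom_trunc_gt[OF hom_bracket[OF hom_B8 hom_B0]]) (simp_all add: Sp_zero')

lemma P_8_1: "trunc5 (lie_bracket (B 8) (B 1)) \<in> Sp B 14"
  by (subst hom_trunc_gt[OF hom_bracket[OF hom_B8 hom_B1]]) (simp_all add: Sp_zero')

lemma P_8_2: "trunc5 (lie_bracket (B 8) (B 2)) \<in> Sp B 14"
  by (subst hom_trunc_gt[OF hom_bracket[OF hom_B8 hom_B2]]) (simp_all add: Sp_zero')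

lemma P_8_3: "trunc5 (lie_bracket (B 8) (B 3)) \<in> Sp B 14"
  by (subst hom_trunc_gt[OF hom_bracket[OF hom_B8 hom_B3]]) (simp_all add: Sp_zero')

lemma P_8_4: "trunc5 (lie_bracket (B 8) (B 4)) \<in> Sp B 14"
  by (subst hom_trunc_gt[OF hom_bracket[OF hom_B8 hom_B4]]) (simp_all add: Sp_zero')

lemma P_8_5: "trunc5 (lie_bracket (B 8) (B 5)) \<in> Sp B 14"
  by (subst hom_trunc_gt[OF hom_bracket[OF hom_B8 hom_B5]]) (simp_all add: Sp_zero')

lemma P_8_6: "trunc5 (lie_bracket (B 8) (B 6)) \<in> Sp B 14"
  by (subst hom_trunc_gt[OF hom_bracket[OF hom_B8 hom_B6]]) (simp_all add: Sp_zero')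

lemma P_8_7: "trunc5 (lie_bracket (B 8) (B 7)) \<in> Sp B 14"
  by (subst hom_trunc_gt[OF hom_bracket[OF hom_B8 hom_B7]]) (simp_all add: Sp_zero')

lemma P_8_8: "trunc5 (lie_bracket (B 8) (B 8)) \<in> Sp B 14"
  by (subst hom_trunc_gt[OF hom_bracket[OF hom_B8 hom_B8]]) (simp_all add: Sp_zero')

lemma P_8_9: "trunc5 (lie_bracket (B 8) (B 9)) \<in> Sp B 14"
  by (subst hom_trunc_gt[OF hom_bracket[OF hom_B8 hom_B9]]) (simp_all add: Sp_zero')

lemma P_8_10: "trunc5 (lie_bracket (B 8) (B 10)) \<in> Sp B 14"
  by (subst hom_trunc_gt[OF hom_bracket[OF hom_B8 hom_B10]]) (simp_all add: Sp_zero')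

lemma P_8_11: "trunc5 (lie_bracket (B 8) (B 11)) \<in> Sp B 14"
  by (subst hom_trunc_gt[OF hom_bracket[OF hom_B8 hom_B11]]) (simp_all add: Sp_zero')

lemma P_8_12: "trunc5 (lie_bracket (B 8) (B 12)) \<in> Sp B 14"
  by (subst hom_trunc_gt[OF hom_bracket[OF hom_B8 hom_B12]]) (simp_all add: Sp_zero')

lemma P_8_13: "trunc5 (lie_bracket (B 8) (B 13)) \<in> Sp B 14"
  by (subst hom_trunc_gt[OF hom_bracket[OF hom_B8 hom_B13]]) (simp_all add: Sp_zero')

lemma P_9_0: "trunc5 (lie_bracket (B 9) (B 0)) \<in> Sp B 14"
  by (subst hom_trunc_gt[OF hom_bracket[OF hom_B9 hom_B0]]) (simp_all add: Sp_zero')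

lemma P_9_1: "trunc5 (lie_bracket (B 9) (B 1)) \<in> Sp B 14"
  by (subst hom_trunc_gt[OF hom_bracket[OF hom_B9 hom_B1]]) (simp_all add: Sp_zero')

lemma P_9_2: "trunc5 (lie_bracket (B 9) (B 2)) \<in> Sp B 14"
  by (subst hom_trunc_gt[OF hom_bracket[OF hom_B9 hom_B2]]) (simp_all add: Sp_zero')

lemma P_9_3: "trunc5 (lie_bracket (B 9) (B 3)) \<in> Sp B 14"
  by (subst hom_trunc_gt[OF hom_bracket[OF hom_B9 hom_B3]]) (simp_all add: Sp_zero')

lemma P_9_4: "trunc5 (lie_bracket (B 9) (B 4)) \<in> Sp B 14"
  by (subst hom_trunc_gt[OF hom_bracket[OF hom_B9 hom_B4]]) (simp_all add: Sp_zero')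

lemma P_9_5: "trunc5 (lie_bracket (B 9) (B 5)) \<in> Sp B 14"
  by (subst hom_trunc_gt[OF hom_bracket[OF hom_B9 hom_B5]]) (simp_all add: Sp_zero')

lemma P_9_6: "trunc5 (lie_bracket (B 9) (B 6)) \<in> Sp B 14"
  by (subst hom_trunc_gt[OF hom_bracket[OF hom_B9 hom_B6]]) (simp_all add: Sp_zero')

lemma P_9_7: "trunc5 (lie_bracket (B 9) (B 7)) \<in> Sp B 14"
  by (subst hom_trunc_gt[OF hom_bracket[OF hom_B9 hom_B7]]) (simp_all add: Sp_zero')

lemma P_9_8: "trunc5 (lie_bracket (B 9) (B 8)) \<in> Sp B 14"
  by (subst hom_trunc_gt[OF hom_bracket[OF hom_B9 hom_B8]]) (simp_all add: Sp_zero')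

lemma P_9_9: "trunc5 (lie_bracket (B 9) (B 9)) \<in> Sp B 14"
  by (subst hom_trunc_gt[OF hom_bracket[OF hom_B9 hom_B9]]) (simp_all add: Sp_zero')

lemma P_9_10: "trunc5 (lie_bracket (B 9) (B 10)) \<in> Sp B 14"
  by (subst hom_trunc_gt[OF hom_bracket[OF hom_B9 hom_B10]]) (simp_all add: Sp_zero')

lemma P_9_11: "trunc5 (lie_bracket (B 9) (B 11)) \<in> Sp B 14"
  by (subst hom_trunc_gt[OF hom_bracket[OF hom_B9 hom_B11]]) (simp_all add: Sp_zero')

lemma P_9_12: "trunc5 (lie_bracket (B 9) (B 12)) \<in> Sp B 14"
  by (subst hom_trunc_gt[OF hom_bracket[OF hom_B9 hom_B12]]) (simp_all add: Sp_zero')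

lemma P_9_13: "trunc5 (lie_bracket (B 9) (B 13)) \<in> Sp B 14"
  by (subst hom_trunc_gt[OF hom_bracket[OF hom_B9 hom_B13]]) (simp_all add: Sp_zero')

lemma P_10_0: "trunc5 (lie_bracket (B 10) (B 0)) \<in> Sp B 14"
  by (subst hom_trunc_gt[OF hom_bracket[OF hom_B10 hom_B0]]) (simp_all add: Sp_zero')

lemma P_10_1: "trunc5 (lie_bracket (B 10) (B 1)) \<in> Sp B 14"
  by (subst hom_trunc_gt[OF hom_bracket[OF hom_B10 hom_B1]]) (simp_all add: Sp_zero')

lemma P_10_2: "trunc5 (lie_bracket (B 10) (B 2)) \<in> Sp B 14"
  by (subst hom_trunc_gt[OF hom_bracket[OF hom_B10 hom_B2]]) (simp_all add: Sp_zero')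

lemma P_10_3: "trunc5 (lie_bracket (B 10) (B 3)) \<in> Sp B 14"
  by (subst hom_trunc_gt[OF hom_bracket[OF hom_B10 hom_B3]]) (simp_all add: Sp_zero')

lemma P_10_4: "trunc5 (lie_bracket (B 10) (B 4)) \<in> Sp B 14"
  by (subst hom_trunc_gt[OF hom_bracket[OF hom_B10 hom_B4]]) (simp_all add: Sp_zero')

lemma P_10_5: "trunc5 (lie_bracket (B 10) (B 5)) \<in> Sp B 14"
  by (subst hom_trunc_gt[OF hom_bracket[OF hom_B10 hom_B5]]) (simp_all add: Sp_zero')

lemma P_10_6: "trunc5 (lie_bracket (B 10) (B 6)) \<in> Sp B 14"
  by (subst hom_trunc_gt[OF hom_bracket[OF hom_B10 hom_B6]]) (simp_all add: Sp_zero')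

lemma P_10_7: "trunc5 (lie_bracket (B 10) (B 7)) \<in> Sp B 14"
  by (subst hom_trunc_gt[OF hom_bracket[OF hom_B10 hom_B7]]) (simp_all add: Sp_zero')

lemma P_10_8: "trunc5 (lie_bracket (B 10) (B 8)) \<in> Sp B 14"
  by (subst hom_trunc_gt[OF hom_bracket[OF hom_B10 hom_B8]]) (simp_all add: Sp_zero')

lemma P_10_9: "trunc5 (lie_bracket (B 10) (B 9)) \<in> Sp B 14"
  by (subst hom_trunc_gt[OF hom_bracket[OF hom_B10 hom_B9]]) (simp_all add: Sp_zero')

lemma P_10_10: "trunc5 (lie_bracket (B 10) (B 10)) \<in> Sp B 14"
  by (subst hom_trunc_gt[OF hom_bracket[OF hom_B10 hom_B10]]) (simp_all add: Sp_zero')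

lemma P_10_11: "trunc5 (lie_bracket (B 10) (B 11)) \<in> Sp B 14"
  by (subst hom_trunc_gt[OF hom_bracket[OF hom_B10 hom_B11]]) (simp_all add: Sp_zero')

lemma P_10_12: "trunc5 (lie_bracket (B 10) (B 12)) \<in> Sp B 14"
  by (subst hom_trunc_gt[OF hom_bracket[OF hom_B10 hom_B12]]) (simp_all add: Sp_zero')

lemma P_10_13: "trunc5 (lie_bracket (B 10) (B 13)) \<in> Sp B 14"
  by (subst hom_trunc_gt[OF hom_bracket[OF hom_B10 hom_B13]]) (simp_all add: Sp_zero')

lemma P_11_0: "trunc5 (lie_bracket (B 11) (B 0)) \<in> Sp B 14"
  by (subst hom_trunc_gt[OF hom_bracket[OF hom_B11 hom_B0]]) (simp_all add: Sp_zero')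

lemma P_11_1: "trunc5 (lie_bracket (B 11) (B 1)) \<in> Sp B 14"
  by (subst hom_trunc_gt[OF hom_bracket[OF hom_B11 hom_B1]]) (simp_all add: Sp_zero')

lemma P_11_2: "trunc5 (lie_bracket (B 11) (B 2)) \<in> Sp B 14"
  by (subst hom_trunc_gt[OF hom_bracket[OF hom_B11 hom_B2]]) (simp_all add: Sp_zero')

lemma P_11_3: "trunc5 (lie_bracket (B 11) (B 3)) \<in> Sp B 14"
  by (subst hom_trunc_gt[OF hom_bracket[OF hom_B11 hom_B3]]) (simp_all add: Sp_zero')

lemma P_11_4: "trunc5 (lie_bracket (B 11) (B 4)) \<in> Sp B 14"
  by (subst hom_trunc_gt[OF hom_bracket[OF hom_B11 hom_B4]]) (simp_all add: Sp_zero')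

lemma P_11_5: "trunc5 (lie_bracket (B 11) (B 5)) \<in> Sp B 14"
  by (subst hom_trunc_gt[OF hom_bracket[OF hom_B11 hom_B5]]) (simp_all add: Sp_zero')

lemma P_11_6: "trunc5 (lie_bracket (B 11) (B 6)) \<in> Sp B 14"
  by (subst hom_trunc_gt[OF hom_bracket[OF hom_B11 hom_B6]]) (simp_all add: Sp_zero')

lemma P_11_7: "trunc5 (lie_bracket (B 11) (B 7)) \<in> Sp B 14"
  by (subst hom_trunc_gt[OF hom_bracket[OF hom_B11 hom_B7]]) (simp_all add: Sp_zero')

lemma P_11_8: "trunc5 (lie_bracket (B 11) (B 8)) \<in> Sp B 14"
  by (subst hom_trunc_gt[OF hom_bracket[OF hom_B11 hom_B8]]) (simp_all add: Sp_zero')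

lemma P_11_9: "trunc5 (lie_bracket (B 11) (B 9)) \<in> Sp B 14"
  by (subst hom_trunc_gt[OF hom_bracket[OF hom_B11 hom_B9]]) (simp_all add: Sp_zero')

lemma P_11_10: "trunc5 (lie_bracket (B 11) (B 10)) \<in> Sp B 14"
  by (subst hom_trunc_gt[OF hom_bracket[OF hom_B11 hom_B10]]) (simp_all add: Sp_zero')

lemma P_11_11: "trunc5 (lie_bracket (B 11) (B 11)) \<in> Sp B 14"
  by (subst hom_trunc_gt[OF hom_bracket[OF hom_B11 hom_B11]]) (simp_all add: Sp_zero')

lemma P_11_12: "trunc5 (lie_bracket (B 11) (B 12)) \<in> Sp B 14"
  by (subst hom_trunc_gt[OF hom_bracket[OF hom_B11 hom_B12]]) (simp_all add: Sp_zero')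

lemma P_11_13: "trunc5 (lie_bracket (B 11) (B 13)) \<in> Sp B 14"
  by (subst hom_trunc_gt[OF hom_bracket[OF hom_B11 hom_B13]]) (simp_all add: Sp_zero')

lemma P_12_0: "trunc5 (lie_bracket (B 12) (B 0)) \<in> Sp B 14"
  by (subst hom_trunc_gt[OF hom_bracket[OF hom_B12 hom_B0]]) (simp_all add: Sp_zero')

lemma P_12_1: "trunc5 (lie_bracket (B 12) (B 1)) \<in> Sp B 14"
  by (subst hom_trunc_gt[OF hom_bracket[OF hom_B12 hom_B1]]) (simp_all add: Sp_zero')

lemma P_12_2: "trunc5 (lie_bracket (B 12) (B 2)) \<in> Sp B 14"
  by (subst hom_trunc_gt[OF hom_bracket[OF hom_B12 hom_B2]]) (simp_all add: Sp_zero')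

lemma P_12_3: "trunc5 (lie_bracket (B 12) (B 3)) \<in> Sp B 14"
  by (subst hom_trunc_gt[OF hom_bracket[OF hom_B12 hom_B3]]) (simp_all add: Sp_zero')

lemma P_12_4: "trunc5 (lie_bracket (B 12) (B 4)) \<in> Sp B 14"
  by (subst hom_trunc_gt[OF hom_bracket[OF hom_B12 hom_B4]]) (simp_all add: Sp_zero')

lemma P_12_5: "trunc5 (lie_bracket (B 12) (B 5)) \<in> Sp B 14"
  by (subst hom_trunc_gt[OF hom_bracket[OF hom_B12 hom_B5]]) (simp_all add: Sp_zero')

lemma P_12_6: "trunc5 (lie_bracket (B 12) (B 6)) \<in> Sp B 14"
  by (subst hom_trunc_gt[OF hom_bracket[OF hom_B12 hom_B6]]) (simp_all add: Sp_zero')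

lemma P_12_7: "trunc5 (lie_bracket (B 12) (B 7)) \<in> Sp B 14"
  by (subst hom_trunc_gt[OF hom_bracket[OF hom_B12 hom_B7]]) (simp_all add: Sp_zero')

lemma P_12_8: "trunc5 (lie_bracket (B 12) (B 8)) \<in> Sp B 14"
  by (subst hom_trunc_gt[OF hom_bracket[OF hom_B12 hom_B8]]) (simp_all add: Sp_zero')

lemma P_12_9: "trunc5 (lie_bracket (B 12) (B 9)) \<in> Sp B 14"
  by (subst hom_trunc_gt[OF hom_bracket[OF hom_B12 hom_B9]]) (simp_all add: Sp_zero')

lemma P_12_10: "trunc5 (lie_bracket (B 12) (B 10)) \<in> Sp B 14"
  by (subst hom_trunc_gt[OF hom_bracket[OF hom_B12 hom_B10]]) (simp_all add: Sp_zero')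

lemma P_12_11: "trunc5 (lie_bracket (B 12) (B 11)) \<in> Sp B 14"
  by (subst hom_trunc_gt[OF hom_bracket[OF hom_B12 hom_B11]]) (simp_all add: Sp_zero')

lemma P_12_12: "trunc5 (lie_bracket (B 12) (B 12)) \<in> Sp B 14"
  by (subst hom_trunc_gt[OF hom_bracket[OF hom_B12 hom_B12]]) (simp_all add: Sp_zero')

lemma P_12_13: "trunc5 (lie_bracket (B 12) (B 13)) \<in> Sp B 14"
  by (subst hom_trunc_gt[OF hom_bracket[OF hom_B12 hom_B13]]) (simp_all add: Sp_zero')

lemma P_13_0: "trunc5 (lie_bracket (B 13) (B 0)) \<in> Sp B 14"
  by (subst hom_trunc_gt[OF hom_bracket[OF hom_B13 hom_B0]]) (simp_all add: Sp_zero')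

lemma P_13_1: "trunc5 (lie_bracket (B 13) (B 1)) \<in> Sp B 14"
  by (subst hom_trunc_gt[OF hom_bracket[OF hom_B13 hom_B1]]) (simp_all add: Sp_zero')

lemma P_13_2: "trunc5 (lie_bracket (B 13) (B 2)) \<in> Sp B 14"
  by (subst hom_trunc_gt[OF hom_bracket[OF hom_B13 hom_B2]]) (simp_all add: Sp_zero')

lemma P_13_3: "trunc5 (lie_bracket (B 13) (B 3)) \<in> Sp B 14"
  by (subst hom_trunc_gt[OF hom_bracket[OF hom_B13 hom_B3]]) (simp_all add: Sp_zero')

lemma P_13_4: "trunc5 (lie_bracket (B 13) (B 4)) \<in> Sp B 14"
  by (subst hom_trunc_gt[OF hom_bracket[OF hom_B13 hom_B4]]) (simp_all add: Sp_zero')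

lemma P_13_5: "trunc5 (lie_bracket (B 13) (B 5)) \<in> Sp B 14"
  by (subst hom_trunc_gt[OF hom_bracket[OF hom_B13 hom_B5]]) (simp_all add: Sp_zero')

lemma P_13_6: "trunc5 (lie_bracket (B 13) (B 6)) \<in> Sp B 14"
  by (subst hom_trunc_gt[OF hom_bracket[OF hom_B13 hom_B6]]) (simp_all add: Sp_zero')

lemma P_13_7: "trunc5 (lie_bracket (B 13) (B 7)) \<in> Sp B 14"
  by (subst hom_trunc_gt[OF hom_bracket[OF hom_B13 hom_B7]]) (simp_all add: Sp_zero')

lemma P_13_8: "trunc5 (lie_bracket (B 13) (B 8)) \<in> Sp B 14"
  by (subst hom_trunc_gt[OF hom_bracket[OF hom_B13 hom_B8]]) (simp_all add: Sp_zero')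

lemma P_13_9: "trunc5 (lie_bracket (B 13) (B 9)) \<in> Sp B 14"
  by (subst hom_trunc_gt[OF hom_bracket[OF hom_B13 hom_B9]]) (simp_all add: Sp_zero')

lemma P_13_10: "trunc5 (lie_bracket (B 13) (B 10)) \<in> Sp B 14"
  by (subst hom_trunc_gt[OF hom_bracket[OF hom_B13 hom_B10]]) (simp_all add: Sp_zero')

lemma P_13_11: "trunc5 (lie_bracket (B 13) (B 11)) \<in> Sp B 14"
  by (subst hom_trunc_gt[OF hom_bracket[OF hom_B13 hom_B11]]) (simp_all add: Sp_zero')

lemma P_13_12: "trunc5 (lie_bracket (B 13) (B 12)) \<in> Sp B 14"
  by (subst hom_trunc_gt[OF hom_bracket[OF hom_B13 hom_B12]]) (simp_all add: Sp_zero')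

lemma P_13_13: "trunc5 (lie_bracket (B 13) (B 13)) \<in> Sp B 14"
  by (subst hom_trunc_gt[OF hom_bracket[OF hom_B13 hom_B13]]) (simp_all add: Sp_zero')



lemma sum14: "(\<Sum>k<(14::nat). g k) = g 0 + g 1 + g 2 + g 3 + g 4 + g 5 + g 6 + g 7 + g 8 + g 9 + g 10 + g 11 + g 12 + g 13"
  by (simp add: lessThan_nat_numeral add_ac)

lemma less14: "i < (14::nat) \<Longrightarrow> i = 0 \<or> i = 1 \<or> i = 2 \<or> i = 3 \<or> i = 4 \<or> i = 5 \<or> i = 6 \<or> i = 7 \<or> i = 8 \<or> i = 9 \<or> i = 10 \<or> i = 11 \<or> i = 12 \<or> i = 13"
  by presburger

lemma pairs: "i < 14 \<Longrightarrow> j < 14 \<Longrightarrow> trunc5 (lie_bracket (B i) (B j)) \<in> Sp B 14"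
  apply (drule less14, drule less14)
  apply (elim disjE)
  apply (simp_all only: P_0_0 P_0_1 P_0_2 P_0_3 P_0_4 P_0_5 P_0_6 P_0_7 P_0_8 P_0_9 P_0_10 P_0_11 P_0_12 P_0_13 P_1_0 P_1_1 P_1_2 P_1_3 P_1_4 P_1_5 P_1_6 P_1_7 P_1_8 P_1_9 P_1_10 P_1_11 P_1_12 P_1_13 P_2_0 P_2_1 P_2_2 P_2_3 P_2_4 P_2_5 P_2_6 P_2_7 P_2_8 P_2_9 P_2_10 P_2_11 P_2_12 P_2_13 P_3_0 P_3_1 P_3_2 P_3_3 P_3_4 P_3_5 P_3_6 P_3_7 P_3_8 P_3_9 P_3_10 P_3_11 P_3_12 P_3_13 P_4_0 P_4_1 P_4_2 P_4_3 P_4_4 P_4_5 P_4_6 P_4_7 P_4_8 P_4_9 P_4_10 P_4_11 P_4_12 P_4_13 P_5_0 P_5_1 P_5_2 P_5_3 P_5_4 P_5_5 P_5_6 P_5_7 P_5_8 P_5_9 P_5_10 P_5_11 P_5_12 P_5_13 P_6_0 P_6_1 P_6_2 P_6_3 P_6_4 P_6_5 P_6_6 P_6_7 P_6_8 P_6_9 P_6_10 P_6_11 P_6_12 P_6_13 P_7_0 P_7_1 P_7_2 P_7_3 P_7_4 P_7_5 P_7_6 P_7_7 P_7_8 P_7_9 P_7_10 P_7_11 P_7_12 P_7_13 P_8_0 P_8_1 P_8_2 P_8_3 P_8_4 P_8_5 P_8_6 P_8_7 P_8_8 P_8_9 P_8_10 P_8_11 P_8_12 P_8_13 P_9_0 P_9_1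 P_9_2 P_9_3 P_9_4 P_9_5 P_9_6 P_9_7 P_9_8 P_9_9 P_9_10 P_9_11 P_9_12 P_9_13 P_10_0 P_10_1 P_10_2 P_10_3 P_10_4 P_10_5 P_10_6 P_10_7 P_10_8 P_10_9 P_10_10 P_10_11 P_10_12 P_10_13 P_11_0 P_11_1 P_11_2 P_11_3 P_11_4 P_11_5 P_11_6 P_11_7 P_11_8 P_11_9 P_11_10 P_11_11 P_11_12 P_11_13 P_12_0 P_12_1 P_12_2 P_12_3 P_12_4 P_12_5 P_12_6 P_12_7 P_12_8 P_12_9 P_12_10 P_12_11 P_12_12 P_12_13 P_13_0 P_13_1 P_13_2 P_13_3 P_13_4 P_13_5 P_13_6 P_13_7 P_13_8 P_13_9 P_13_10 P_13_11 P_13_12 P_13_13)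
  done

lemma B0_eq: "B 0 = nc_var X"
proof (rule ext_check[OF hom_B0])
  show "hom (nc_var X) 1" using hom_var by (simp add: eval_nat_numeral)
  show "\<forall>w\<in>set (words 1). B 0 w = (nc_var X) w"
    unfolding words_num B_simps B_defs by (simp add: pl_def lie_bracket_def nc_var_def)
qed

lemma B1_eq: "B 1 = nc_var Y"
proof (rule ext_check[OF hom_B1])
  show "hom (nc_var Y) 1" using hom_var by (simp add: eval_nat_numeral)
  show "\<forall>w\<in>set (words 1). B 1 w = (nc_var Y) w"
    unfolding words_num B_simps B_defs by (simp add: pl_def lie_bracket_def nc_var_def)
qed

lemma B2_eq: "B 2 = lie_bracket (nc_var Y) (nc_var X)"
proof (rule ext_check[OF hom_B2])
  show "hom (lie_bracket (nc_var Y) (nc_var X)) 2" using hom_bracket[OF hom_var hom_var] by (simp add: eval_nat_numeral)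
  show "\<forall>w\<in>set (words 2). B 2 w = (lie_bracket (nc_var Y) (nc_var X)) w"
    unfolding words_num B_simps B_defs by (simp add: pl_def lie_bracket_def nc_var_def)
qed

lemma B3_eq: "B 3 = lie_bracket (nc_var X) (B 2)"
proof (rule ext_check[OF hom_B3])
  show "hom (lie_bracket (nc_var X) (B 2)) 3" using hom_bracket[OF hom_var hom_B2] by (simp add: eval_nat_numeral)
  show "\<forall>w\<in>set (words 3). B 3 w = (lie_bracket (nc_var X) (B 2)) w"
    unfolding words_num B_simps B_defs by (simp add: pl_def lie_bracket_def nc_var_def)
qed

lemma B5_eq: "B 5 = lie_bracket (nc_var X) (B 3)"
proof (rule ext_check[OF hom_B5])
  show "hom (lie_bracket (nc_var X) (B 3)) 4" using hom_bracket[OF hom_var hom_B3] by (simp add: eval_nat_numeral)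
  show "\<forall>w\<in>set (words 4). B 5 w = (lie_bracket (nc_var X) (B 3)) w"
    unfolding words_num B_simps B_defs by (simp add: pl_def lie_bracket_def nc_var_def)
qed

lemma B8_eq: "B 8 = lie_bracket (nc_var X) (B 5)"
proof (rule ext_check[OF hom_B8])
  show "hom (lie_bracket (nc_var X) (B 5)) 5" using hom_bracket[OF hom_var hom_B5] by (simp add: eval_nat_numeral)
  show "\<forall>w\<in>set (words 5). B 8 w = (lie_bracket (nc_var X) (B 5)) w"
    unfolding words_num B_simps B_defs by (simp add: pl_def lie_bracket_def nc_var_def)
qed

lemma B9_eq: "B 9 = lie_bracket (B 2) (B 3)"
proof (rule ext_check[OF hom_B9])
  show "hom (lie_bracket (B 2) (B 3)) 5" using hom_bracket[OF hom_B2 hom_B3] by (simp add: eval_nat_numeral)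
  show "\<forall>w\<in>set (words 5). B 9 w = (lie_bracket (B 2) (B 3)) w"
    unfolding words_num B_simps B_defs by (simp add: pl_def lie_bracket_def nc_var_def)
qed

lemma trunc_Sp:
  assumes "p \<in> lie_gen {nc_var X, nc_var Y}"
  shows "trunc5 p \<in> (Sp B 14 :: 'k::field ncpoly set)"
  using assms
proof (induction rule: lie_gen.induct)
  case (base p)
  then have "p = nc_var X \<or> p = nc_var Y" by simp
  then have "p = B 0 \<or> p = B 1" by (metis B0_eq B1_eq)
  moreover have "trunc5 (B 0) = (B 0 :: 'k ncpoly)" by (rule hom_trunc_le[OF hom_B0]) simp
  moreover have "trunc5 (B 1) = (B 1 :: 'k ncpoly)" by (rule hom_trunc_le[OF hom_B1]) simp
  ultimately show ?case using Sp_B[of 0 14 B] Sp_B[of 1 14 B] by auto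
next
  case zero
  show ?case by (simp add: trunc5_def zero_fun_def Sp_zero)
next
  case (add p q)
  have e: "trunc5 (p + q) = (\<lambda>w. trunc5 p w + trunc5 q w)" by (rule ext) (simp add: trunc5_def)
  show ?case unfolding e by (rule Sp_add[OF add.IH])
next
  case (smult p c)
  have "trunc5 (nc_smult c p) = (\<lambda>w. c * trunc5 p w)" by (rule ext) (simp add: trunc5_def nc_smult_def)
  then show ?case using smult Sp_smult by simp
next
  case (bracket p q)
  show ?case using Sp_bracket[OF bracket.IH pairs] trunc_bracket[of p q] by simp
qed

abbreviation G :: "'k::field ncpoly set" where
  "G \<equiv> lie_gen {nc_var X, lie_bracket (nc_var Y) (nc_var X)}"

lemma G_lin: assumes "p \<in> G" "q \<in> G" shows "(\<lambda>w. a * p w + q w) \<in> G"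
proof -
  have "nc_smult a p + q \<in> G" by (intro lie_gen.add lie_gen.smult assms)
  then show ?thesis by (simp add: nc_smult_def plus_fun_def)
qed

lemma G_zero: "(\<lambda>w. 0) \<in> G"
  using lie_gen.zero by (simp add: zero_fun_def)

lemma G_B0: "B 0 \<in> G" unfolding B0_eq by (rule lie_gen.base) simp
lemma G_B2: "B 2 \<in> G" unfolding B2_eq by (rule lie_gen.base) simp
lemma G_B3: "B 3 \<in> G" unfolding B3_eq by (intro lie_gen.bracket G_B2 lie_gen.base) simp
lemma G_B5: "B 5 \<in> G" unfolding B5_eq by (intro lie_gen.bracket G_B3 lie_gen.base) simp
lemma G_B8: "B 8 \<in> G" unfolding B8_eq by (intro lie_gen.bracket G_B5 lie_gen.base) simp
lemma G_B9: "B 9 \<in> G" unfolding B9_eq by (intro lie_gen.bracket G_B2 G_B3)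

lemma B_Suc0: "B (Suc 0) = B1" by (simp add: B_def)

lemmas evsimps = sum14 B_Suc0 B_simps B_defs pl_def upt_rec

theorem proposition5p3:
  fixes f :: "'k::field_char_0 ncpoly"
  assumes "f \<in> free_lie"
    and "delta f = 0"
    and "f \<noteq> 0"
    and "nc_degree_le f 5"
  shows "f \<in> lie_gen {nc_var X, lie_bracket (nc_var Y) (nc_var X)}"
proof -
  have ft: "trunc5 f = f" using assms(4) unfolding nc_degree_le_def trunc5_def by (intro ext) auto
  have "f \<in> Sp B 14" using trunc_Sp[OF assms(1)[unfolded free_lie_def]] ft by simp
  then obtain c where hf: "f = (\<lambda>w. \<Sum>k<14. c k * B k w)" unfolding Sp_def by blast
  have d: "\<And>w. delta f w = 0" using assms(2) by simp
  have c1: "c 1 = 0" using d[of "[X]"] unfolding hf delta_eval by (simp add: evsimps)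
  have c1': "c (Suc 0) = 0" using c1 by simp
  have c4: "c 4 = 0" using d[of "[Y,X,X]"] unfolding hf delta_eval by (simp add: evsimps)
  have c6: "c 6 = 0" using d[of "[Y,X,X,X]"] unfolding hf delta_eval by (simp add: evsimps)
  have c7: "c 7 = 0" using d[of "[Y,Y,X,X]"] unfolding hf delta_eval by (simp add: evsimps)
  have c10: "c 10 = 0" using d[of "[Y,X,X,X,X]"] unfolding hf delta_eval by (simp add: evsimps)
  have c11: "c 11 = 0" using d[of "[Y,Y,X,X,X]"] unfolding hf delta_eval by (simp add: evsimps)
  have c12: "c 12 = 0" using d[of "[X,X,Y,X,Y]"] c11 unfolding hf delta_eval by (simp add: evsimps)
  have c13: "c 13 = 0" using d[of "[Y,Y,Y,X,X]"] unfolding hf delta_eval by (simp add: evsimps)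
  have "f = (\<lambda>w. c 0 * B 0 w + (c 2 * B 2 w + (c 3 * B 3 w + (c 5 * B 5 w + (c 8 * B 8 w + (c 9 * B 9 w + 0))))))"
    unfolding hf by (rule ext) (simp add: sum14 c1 c1' c4 c6 c7 c10 c11 c12 c13)
  also have "\<dots> \<in> G"
    by (intro G_lin G_zero G_B0 G_B2 G_B3 G_B5 G_B8 G_B9)
  finally show ?thesis .
qed

end
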